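(* Let $C=V^{(q)}\cap\mathcal{F}^{\otimes n}W^{(q)}$ be a CSS code on $n$ qupits, with $V,W\le\mathbb{Z}_p^n$ linear and $V^\perp\subseteq W$, and let $B\subseteq\{1,\dots,n\}$. Suppose the state $\rho$ has fidelity 1 with $C_B=V_B^{(q)}\cap\mathcal{F}^{\otimes n}W_B^{(q)}$. Then $\rho$ can be written as $\rho=\sum_i p_i|\psi_i\rangle\langle\psi_i|$ with $|\psi_i\rangle=\sum_j c_{ij}E_j|\phi_{ij}\rangle$, where each $E_j$ is a Pauli operator whose support is contained in $B$ and each $|\phi_{ij}\rangle\in C$.
   Context: A qupit is $\mathbb{C}^p$ for a prime $p$, with basis $\{|a\rangle:a\in\mathbb{Z}_p\}$. Set $\omega=e^{2\pi i/p}$, $\mathcal{F}|a\rangle=\frac1{\sqrt p}\sum_b\omega^{ab}|b\rangle$, $X|a\rangle=|a+1\rangle$ and $Z|a\rangle=\omega^a|a\rangle$. Pauli operators on $n$ qupits are the tensor products $X^{\mathbf x}Z^{\mathbf z}$, and their support is the set of positions where they act non-trivially. For a linear code $U\le\mathbb{Z}_p^n$, let $U^{(q)}=\mathrm{span}\{|\mathbf u\rangle:\mathbf u\in U\}$. For $B\subseteq\{1,\dots,n\}$, let $V_B=\{\mathbf v\in\mathbb{Z}_p^n:\exists\mathbf w\in V\text{ with }\mathrm{supp}(\mathbf v-\mathbf w)\subseteq B\}$, and define $W_B$ analogously. *)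

theory Defs
  imports Complex_Main "HOL-Computational_Algebra.Primes"
begin

text \<open>Vectors of Z_p^n: functions nat => nat, entries < p at positions 0..n-1,
  and 0 elsewhere (qupit positions are indexed 0..n-1).\<close>
definition Zpn :: "nat \<Rightarrow> nat \<Rightarrow> (nat \<Rightarrow> nat) set" where
  "Zpn p n = {v. (\<forall>i<n. v i < p) \<and> (\<forall>i\<ge>n. v i = 0)}"

definition vadd :: "nat \<Rightarrow> (nat \<Rightarrow> nat) \<Rightarrow> (nat \<Rightarrow> nat) \<Rightarrow> (nat \<Rightarrow> nat)" where
  "vadd p u v = (\<lambda>i. (u i + v i) mod p)"

definition vsub :: "nat \<Rightarrow> (nat \<Rightarrow> nat) \<Rightarrow> (nat \<Rightarrow> nat) \<Rightarrow> (nat \<Rightarrow> nat)" where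
  "vsub p u v = (\<lambda>i. (u i + p - v i) mod p)"

definition smul :: "nat \<Rightarrow> nat \<Rightarrow> (nat \<Rightarrow> nat) \<Rightarrow> (nat \<Rightarrow> nat)" where
  "smul p a v = (\<lambda>i. (a * v i) mod p)"

definition dot :: "nat \<Rightarrow> nat \<Rightarrow> (nat \<Rightarrow> nat) \<Rightarrow> (nat \<Rightarrow> nat) \<Rightarrow> nat" where
  "dot p n u v = (\<Sum>i<n. u i * v i) mod p"

definition linear_code :: "nat \<Rightarrow> nat \<Rightarrow> (nat \<Rightarrow> nat) set \<Rightarrow> bool" where
  "linear_code p n U \<longleftrightarrow> U \<subseteq> Zpn p n \<and> (\<lambda>i. 0) \<in> U \<and>
     (\<forall>u\<in>U. \<forall>v\<in>U. vadd p u v \<in> U) \<and> (\<forall>a<p. \<forall>u\<in>U. smul p a u \<in> U)"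

definition dual_code :: "nat \<Rightarrow> nat \<Rightarrow> (nat \<Rightarrow> nat) set \<Rightarrow> (nat \<Rightarrow> nat) set" where
  "dual_code p n U = {w \<in> Zpn p n. \<forall>u\<in>U. dot p n w u = 0}"

text \<open>V_B: vectors differing from some element of V only on positions in B.\<close>
definition punct :: "nat \<Rightarrow> nat \<Rightarrow> (nat \<Rightarrow> nat) set \<Rightarrow> nat set \<Rightarrow> (nat \<Rightarrow> nat) set" where
  "punct p n U B = {v \<in> Zpn p n. \<exists>w\<in>U. \<forall>i. i \<notin> B \<longrightarrow> v i = w i}"

text \<open>Quantum states on n qupits: complex amplitudes indexed by Z_p^n.\<close>
type_synonym qvec = "(nat \<Rightarrow> nat) \<Rightarrow> complex"

definition omega :: "nat \<Rightarrow> nat \<Rightarrow> complex" where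
  "omega p k = cis (2 * pi * real k / real p)"

definition ket :: "(nat \<Rightarrow> nat) \<Rightarrow> qvec" where
  "ket u = (\<lambda>x. if x = u then 1 else 0)"

text \<open>U^(q) = span of the basis kets |u>, u in U.\<close>
definition qcode :: "nat \<Rightarrow> nat \<Rightarrow> (nat \<Rightarrow> nat) set \<Rightarrow> qvec set" where
  "qcode p n U = {\<psi>. \<exists>c :: (nat \<Rightarrow> nat) \<Rightarrow> complex. \<psi> = (\<lambda>x. \<Sum>u\<in>U. c u * ket u x)}"

definition qft :: "nat \<Rightarrow> nat \<Rightarrow> qvec \<Rightarrow> qvec" where
  "qft p n \<psi> = (\<lambda>y. if y \<in> Zpn p n then
      (1 / complex_of_real (sqrt (real p))) ^ n * (\<Sum>x\<in>Zpn p n. omega p (dot p n x y) * \<psi> x)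
     else 0)"

definition css_code :: "nat \<Rightarrow> nat \<Rightarrow> (nat \<Rightarrow> nat) set \<Rightarrow> (nat \<Rightarrow> nat) set \<Rightarrow> qvec set" where
  "css_code p n V W = qcode p n V \<inter> qft p n ` qcode p n W"

text \<open>Pauli operator X^x Z^z: |a> \<mapsto> omega^{z.a} |a+x>.\<close>
definition pauli :: "nat \<Rightarrow> nat \<Rightarrow> (nat \<Rightarrow> nat) \<Rightarrow> (nat \<Rightarrow> nat) \<Rightarrow> qvec \<Rightarrow> qvec" where
  "pauli p n x z \<psi> = (\<lambda>b. if b \<in> Zpn p n then
      omega p (dot p n z (vsub p b x)) * \<psi> (vsub p b x) else 0)"

definition pauli_supp :: "(nat \<Rightarrow> nat) \<Rightarrow> (nat \<Rightarrow> nat) \<Rightarrow> nat set" where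
  "pauli_supp x z = {i. x i \<noteq> 0 \<or> z i \<noteq> 0}"

definition cinner :: "nat \<Rightarrow> nat \<Rightarrow> qvec \<Rightarrow> qvec \<Rightarrow> complex" where
  "cinner p n \<psi> \<phi> = (\<Sum>x\<in>Zpn p n. cnj (\<psi> x) * \<phi> x)"

definition in_space :: "nat \<Rightarrow> nat \<Rightarrow> qvec \<Rightarrow> bool" where
  "in_space p n \<psi> \<longleftrightarrow> (\<forall>x. x \<notin> Zpn p n \<longrightarrow> \<psi> x = 0)"

type_synonym qop = "(nat \<Rightarrow> nat) \<Rightarrow> (nat \<Rightarrow> nat) \<Rightarrow> complex"

definition density :: "nat \<Rightarrow> nat \<Rightarrow> qop \<Rightarrow> bool" where
  "density p n \<rho> \<longleftrightarrow>
     (\<forall>x y. x \<notin> Zpn p n \<or> y \<notin> Zpn p n \<longrightarrow> \<rho> x y = 0) \<and>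
     (\<forall>x y. \<rho> y x = cnj (\<rho> x y)) \<and>
     (\<forall>\<psi>. 0 \<le> Re (\<Sum>x\<in>Zpn p n. \<Sum>y\<in>Zpn p n. cnj (\<psi> x) * \<rho> x y * \<psi> y)) \<and>
     (\<Sum>x\<in>Zpn p n. \<rho> x x) = 1"

definition proj :: "nat \<Rightarrow> nat \<Rightarrow> qvec set \<Rightarrow> qvec \<Rightarrow> qvec" where
  "proj p n S \<psi> = (THE \<phi>. \<phi> \<in> S \<and> in_space p n \<phi> \<and>
       (\<forall>\<chi>\<in>S. cinner p n \<chi> (\<lambda>x. \<psi> x - \<phi> x) = 0))"

text \<open>Fidelity of a state with a code (subspace) S: tr(\<Pi>_S \<rho>).\<close>
definition code_fidelity :: "nat \<Rightarrow> nat \<Rightarrow> qvec set \<Rightarrow> qop \<Rightarrow> complex" where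
  "code_fidelity p n S \<rho> = (\<Sum>x\<in>Zpn p n. proj p n S (\<lambda>y. \<rho> y x) x)"

end

theory Submission
  imports Defs "HOL-Library.FuncSet"
begin


lemma Zpn_iff: "v \<in> Zpn p n \<longleftrightarrow> (\<forall>i<n. v i < p) \<and> (\<forall>i\<ge>n. v i = 0)"
  by (simp add: Zpn_def)

lemma Zpn_lt: "v \<in> Zpn p n \<Longrightarrow> 0 < p \<Longrightarrow> v i < p"
  by (cases "i < n") (auto simp: Zpn_def)

lemma Zpn_le: "v \<in> Zpn p n \<Longrightarrow> v i \<le> p"
  by (cases "i < n") (auto simp: Zpn_def intro: less_imp_le)

lemma Zpn_eq_image:
  "Zpn p n = (\<lambda>f i. if i < n then f i else 0) ` (PiE {..<n} (\<lambda>_. {..<p}))"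
proof (intro equalityI subsetI)
  fix v assume v: "v \<in> Zpn p n"
  have "restrict v {..<n} \<in> PiE {..<n} (\<lambda>_. {..<p})" using v by (auto simp: Zpn_def)
  moreover have "v = (\<lambda>i. if i < n then restrict v {..<n} i else 0)"
    using v by (auto simp: Zpn_def)
  ultimately show "v \<in> (\<lambda>f i. if i < n then f i else 0) ` (PiE {..<n} (\<lambda>_. {..<p}))" by blast
qed (auto simp: Zpn_def PiE_def Pi_def)

lemma finite_Zpn[simp]: "finite (Zpn p n)"
  by (simp add: Zpn_eq_image finite_PiE)

lemma card_Zpn: assumes p0: "0 < p" shows "card (Zpn p n) = p ^ n"
proof -
  have inj: "inj_on (\<lambda>f i. if i < n then f i else 0) (PiE {..<n} (\<lambda>_. {..<p}))"
  proof (rule inj_onI)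
    fix f g assume f: "f \<in> PiE {..<n} (\<lambda>_. {..<p})" and g: "g \<in> PiE {..<n} (\<lambda>_. {..<p})"
      and eq: "(\<lambda>i. if i < n then f i else 0) = (\<lambda>i. if i < n then g i else 0)"
    show "f = g"
    proof (rule PiE_ext[OF f g])
      fix i assume "i \<in> {..<n}" then show "f i = g i" using fun_cong[OF eq, of i] by auto
    qed
  qed
  have "card (Zpn p n) = card (PiE {..<n} (\<lambda>_::nat. {..<p}))"
    by (simp add: Zpn_eq_image card_image[OF inj])
  also have "\<dots> = p ^ n" using p0 by (simp add: card_PiE)
  finally show ?thesis .
qed

lemma zero_Zpn[simp]: "0 < p \<Longrightarrow> (\<lambda>i. 0) \<in> Zpn p n" by (simp add: Zpn_def)

lemma vadd_Zpn[simp]: "0 < p \<Longrightarrow> u \<in> Zpn p n \<Longrightarrow> v \<in> Zpn p n \<Longrightarrow> vadd p u v \<in> Zpn p n"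
  by (auto simp: Zpn_def vadd_def)

lemma vsub_Zpn[simp]: "0 < p \<Longrightarrow> u \<in> Zpn p n \<Longrightarrow> v \<in> Zpn p n \<Longrightarrow> vsub p u v \<in> Zpn p n"
  by (auto simp: Zpn_def vsub_def)

lemma smul_Zpn[simp]: "0 < p \<Longrightarrow> u \<in> Zpn p n \<Longrightarrow> smul p a u \<in> Zpn p n"
  by (auto simp: Zpn_def smul_def)

lemma int_vadd: "int (vadd p u v i) = (int (u i) + int (v i)) mod int p"
  by (simp add: vadd_def zmod_int)

lemma int_vsub: "v i \<le> p \<Longrightarrow> int (vsub p u v i) = (int (u i) - int (v i)) mod int p"
proof -
  assume "v i \<le> p"
  then have "int (u i + p - v i) = int (u i) - int (v i) + int p" by simp
  then show ?thesis by (simp add: vsub_def zmod_int)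
qed

lemma int_smul: "int (smul p a u i) = (int a * int (u i)) mod int p"
  by (simp add: smul_def zmod_int)

lemma int_dot: "int (dot p n a u) = (\<Sum>i<n. int (a i) * int (u i)) mod int p"
  by (simp add: dot_def zmod_int)

lemma dot_sym: "dot p n a u = dot p n u a"
  by (simp add: dot_def mult.commute)

lemma dot_lt: "0 < p \<Longrightarrow> dot p n a u < p"
  by (simp add: dot_def)

lemma nat_eq_via_int: "int a = int b \<Longrightarrow> a = b" by simp

lemma sum_mod_cong:
  fixes g h :: "'a \<Rightarrow> int"
  assumes "\<And>i. i \<in> A \<Longrightarrow> g i mod m = h i mod m"
  shows "(\<Sum>i\<in>A. g i) mod m = (\<Sum>i\<in>A. h i) mod m"
proof -
  have "(\<Sum>i\<in>A. g i) mod m = (\<Sum>i\<in>A. g i mod m) mod m" by (simp add: mod_sum_eq)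
  also have "\<dots> = (\<Sum>i\<in>A. h i mod m) mod m" using assms by (simp cong: sum.cong)
  also have "\<dots> = (\<Sum>i\<in>A. h i) mod m" by (simp add: mod_sum_eq)
  finally show ?thesis .
qed

lemma dot_vadd: "dot p n a (vadd p u v) = (dot p n a u + dot p n a v) mod p"
proof (rule nat_eq_via_int)
  have "int (dot p n a (vadd p u v)) = (\<Sum>i<n. int (a i) * ((int (u i) + int (v i)) mod int p)) mod int p"
    by (simp add: int_dot int_vadd)
  also have "\<dots> = (\<Sum>i<n. int (a i) * (int (u i) + int (v i))) mod int p"
    by (rule sum_mod_cong) (simp add: mod_simps)
  also have "\<dots> = ((\<Sum>i<n. int (a i) * int (u i)) + (\<Sum>i<n. int (a i) * int (v i))) mod int p"
    by (simp add: algebra_simps sum.distrib)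
  also have "\<dots> = int ((dot p n a u + dot p n a v) mod p)"
    by (simp add: int_dot zmod_int mod_simps)
  finally show "int (dot p n a (vadd p u v)) = int ((dot p n a u + dot p n a v) mod p)" .
qed

lemma dot_vsub: assumes "\<forall>i. v i \<le> p"
  shows "(dot p n a (vsub p u v) + dot p n a v) mod p = dot p n a u"
proof (rule nat_eq_via_int)
  have "int ((dot p n a (vsub p u v) + dot p n a v) mod p) =
     ((\<Sum>i<n. int (a i) * ((int (u i) - int (v i)) mod int p)) mod int p
      + (\<Sum>i<n. int (a i) * int (v i)) mod int p) mod int p"
    using assms by (simp add: int_dot int_vsub zmod_int)
  also have "\<dots> = ((\<Sum>i<n. int (a i) * (int (u i) - int (v i))) + (\<Sum>i<n. int (a i) * int (v i))) mod int p"
  proof -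
    have "(\<Sum>i<n. int (a i) * ((int (u i) - int (v i)) mod int p)) mod int p
       = (\<Sum>i<n. int (a i) * (int (u i) - int (v i))) mod int p"
      by (rule sum_mod_cong) (simp add: mod_simps)
    then show ?thesis by (simp add: mod_simps)
  qed
  also have "\<dots> = (\<Sum>i<n. int (a i) * int (u i)) mod int p"
    by (simp add: algebra_simps sum.distrib sum_subtractf)
  also have "\<dots> = int (dot p n a u)" by (simp add: int_dot)
  finally show "int ((dot p n a (vsub p u v) + dot p n a v) mod p) = int (dot p n a u)" .
qed

lemma dot_smul: "dot p n a (smul p c v) = (c * dot p n a v) mod p"
proof (rule nat_eq_via_int)
  have "int (dot p n a (smul p c v)) = (\<Sum>i<n. int (a i) * ((int c * int (v i)) mod int p)) mod int p"
    by (simp add: int_dot int_smul)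
  also have "\<dots> = (\<Sum>i<n. int c * (int (a i) * int (v i))) mod int p"
    by (rule sum_mod_cong) (simp add: mod_simps algebra_simps)
  also have "\<dots> = (int c * (\<Sum>i<n. int (a i) * int (v i))) mod int p"
    by (simp add: sum_distrib_left)
  also have "\<dots> = int ((c * dot p n a v) mod p)"
    by (simp add: int_dot zmod_int mod_simps)
  finally show "int (dot p n a (smul p c v)) = int ((c * dot p n a v) mod p)" .
qed

lemma dot_zero_right[simp]: "dot p n a (\<lambda>i. 0) = 0" by (simp add: dot_def)
lemma dot_zero_left[simp]: "dot p n (\<lambda>i. 0) a = 0" by (simp add: dot_def)



section \<open>Roots of unity and characters\<close>

lemma omega_add: "omega p (a + b) = omega p a * omega p b"
  by (simp add: omega_def cis_mult add_divide_distrib distrib_left)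

lemma omega_0[simp]: "omega p 0 = 1" by (simp add: omega_def)

lemma omega_mult_p: assumes "0 < p" shows "omega p (p * m) = 1"
proof -
  have "2 * pi * real (p * m) / real p = 2 * pi * real m" using assms by simp
  then show ?thesis by (simp add: omega_def)
qed

lemma omega_mod: assumes "0 < p" shows "omega p (k mod p) = omega p k"
proof -
  have "omega p k = omega p (k mod p + p * (k div p))" by (metis mod_mult_div_eq)
  also have "\<dots> = omega p (k mod p)" by (simp only: omega_add omega_mult_p[OF assms]) simp
  finally show ?thesis by (rule sym)
qed

lemma omega_cnj1: "omega p k * cnj (omega p k) = 1"
  by (simp add: omega_def cis_cnj cis_mult)

lemma omega_cnj2: "cnj (omega p k) * omega p k = 1"
  by (simp add: omega_def cis_cnj cis_mult)

lemma omega_neq_1: assumes "0 < k" "k < p" shows "omega p k \<noteq> 1"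
proof
  assume "omega p k = 1"
  then have "cos (2 * pi * real k / real p) = 1"
    unfolding omega_def by (metis Re_complex_of_real cis.sel(1) one_complex.sel(1))
  then obtain m :: int where m: "2 * pi * real k / real p = m * 2 * pi" by (auto simp: cos_one_2pi_int)
  have "real k / real p = (2 * pi * real k / real p) / (2 * pi)" by simp
  also have "\<dots> = m" unfolding m by simp
  finally have "real k / real p = m" .
  then have "real k = m * real p" using assms by (simp add: field_simps)
  then have eq: "real k = real_of_int m * real p" by simp
  have pp: "0 < real p" using assms by simp
  have "0 < real_of_int m * real p" using assms eq by simp
  then have m0: "0 < real_of_int m" using pp by (simp add: zero_less_mult_iff)
  have "real k < real p" using assms by simp
  then have "real_of_int m * real p < real p" using eq by linarith
  then have m1: "real_of_int m < 1" using pp by (simp add: mult_less_cancel_right2)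
  from m0 m1 have "0 < m" "m < 1" by simp_all
  then show False by simp
qed

definition chi :: "nat \<Rightarrow> nat \<Rightarrow> (nat \<Rightarrow> nat) \<Rightarrow> (nat \<Rightarrow> nat) \<Rightarrow> complex" where
  "chi p n a u = omega p (dot p n a u)"

lemma chi_sym: "chi p n a u = chi p n u a" by (simp add: chi_def dot_sym)

lemma chi_vadd: "0 < p \<Longrightarrow> chi p n a (vadd p u v) = chi p n a u * chi p n a v"
  by (simp add: chi_def dot_vadd omega_mod omega_add)

lemma chi_vadd_left: "0 < p \<Longrightarrow> chi p n (vadd p u v) a = chi p n u a * chi p n v a"
  by (metis chi_sym chi_vadd)

lemma chi_cnj1: "chi p n a u * cnj (chi p n a u) = 1" by (simp add: chi_def omega_cnj1)
lemma chi_cnj2: "cnj (chi p n a u) * chi p n a u = 1" by (simp add: chi_def omega_cnj2)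

lemma chi_vsub: assumes "0 < p" "\<forall>i. v i \<le> p"
  shows "chi p n a (vsub p u v) = chi p n a u * cnj (chi p n a v)"
proof -
  have "chi p n a (vsub p u v) * chi p n a v = chi p n a u"
    using dot_vsub[OF assms(2), of n a u] assms(1)
    by (metis chi_def omega_add omega_mod)
  then have "chi p n a (vsub p u v) * chi p n a v * cnj (chi p n a v) = chi p n a u * cnj (chi p n a v)"
    by simp
  then show ?thesis by (simp add: chi_cnj1 mult.assoc)
qed

lemma chi_zero: "dot p n a u = 0 \<Longrightarrow> chi p n a u = 1" by (simp add: chi_def)

lemma chi_neq_1: "0 < p \<Longrightarrow> dot p n a u \<noteq> 0 \<Longrightarrow> chi p n a u \<noteq> 1"
  by (simp add: chi_def omega_neq_1 dot_lt)

section \<open>Linear codes\<close>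

lemma vsub_vadd_cancel: "0 < p \<Longrightarrow> b \<in> Zpn p n \<Longrightarrow> u \<in> Zpn p n \<Longrightarrow> vsub p (vadd p b u) u = b"
proof (rule ext, rule nat_eq_via_int)
  fix i assume p: "0 < p" and b: "b \<in> Zpn p n" and u: "u \<in> Zpn p n"
  have "int (vsub p (vadd p b u) u i) = ((int (b i) + int (u i)) mod int p - int (u i)) mod int p"
    using Zpn_le[OF u] by (simp add: int_vsub int_vadd)
  also have "\<dots> = int (b i) mod int p" by (simp add: mod_simps)
  also have "\<dots> = int (b i)" using Zpn_lt[OF b p] by simp
  finally show "int (vsub p (vadd p b u) u i) = int (b i)" .
qed

lemma vadd_vsub_cancel: "0 < p \<Longrightarrow> b \<in> Zpn p n \<Longrightarrow> u \<in> Zpn p n \<Longrightarrow> vadd p (vsub p b u) u = b"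
proof (rule ext, rule nat_eq_via_int)
  fix i assume p: "0 < p" and b: "b \<in> Zpn p n" and u: "u \<in> Zpn p n"
  have "int (vadd p (vsub p b u) u i) = ((int (b i) - int (u i)) mod int p + int (u i)) mod int p"
    using Zpn_le[OF u] by (simp add: int_vsub int_vadd)
  also have "\<dots> = int (b i) mod int p" by (simp add: mod_simps)
  also have "\<dots> = int (b i)" using Zpn_lt[OF b p] by simp
  finally show "int (vadd p (vsub p b u) u i) = int (b i)" .
qed

lemma vsub_as_vadd: "0 < p \<Longrightarrow> v \<in> Zpn p n \<Longrightarrow> vsub p u v = vadd p u (smul p (p - 1) v)"
proof (rule ext, rule nat_eq_via_int)
  fix i assume p: "0 < p" and v: "v \<in> Zpn p n"
  have "int (vsub p u v i) = (int (u i) - int (v i)) mod int p" using Zpn_le[OF v] by (simp add: int_vsub)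
  also have "\<dots> = (int (u i) - int (v i) + int p * int (v i)) mod int p" by simp
  also have "\<dots> = (int (u i) + (int p - 1) * int (v i)) mod int p" by (simp add: algebra_simps)
  also have "\<dots> = (int (u i) + (int (p - 1) * int (v i)) mod int p) mod int p"
    using p by (simp add: of_nat_diff mod_add_right_eq)
  also have "\<dots> = int (vadd p u (smul p (p - 1) v) i)" by (simp only: int_vadd int_smul)
  finally show "int (vsub p u v i) = int (vadd p u (smul p (p - 1) v) i)" .
qed

lemma lc_sub: "linear_code p n U \<Longrightarrow> U \<subseteq> Zpn p n" by (simp add: linear_code_def)
lemma lc_zero: "linear_code p n U \<Longrightarrow> (\<lambda>i. 0) \<in> U" by (simp add: linear_code_def)
lemma lc_add: "linear_code p n U \<Longrightarrow> u \<in> U \<Longrightarrow> v \<in> U \<Longrightarrow> vadd p u v \<in> U" by (simp add: linear_code_def)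
lemma lc_smul: "linear_code p n U \<Longrightarrow> a < p \<Longrightarrow> u \<in> U \<Longrightarrow> smul p a u \<in> U" by (simp add: linear_code_def)
lemma lc_smul': assumes "linear_code p n U" "0 < p" "u \<in> U" shows "smul p a u \<in> U"
proof -
  have "smul p a u = smul p (a mod p) u" by (simp add: smul_def mod_simps)
  moreover have "smul p (a mod p) u \<in> U" using lc_smul[OF assms(1) _ assms(3), of "a mod p"] assms(2) by simp
  ultimately show ?thesis by simp
qed
lemma lc_vsub: assumes U: "linear_code p n U" and p: "0 < p" and u: "u \<in> U" and v: "v \<in> U"
  shows "vsub p u v \<in> U"
proof -
  have "v \<in> Zpn p n" using lc_sub[OF U] v by blast
  then have "vsub p u v = vadd p u (smul p (p - 1) v)" using vsub_as_vadd[OF p] by blast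
  moreover have "vadd p u (smul p (p - 1) v) \<in> U" using lc_add[OF U u lc_smul'[OF U p v]] .
  ultimately show ?thesis by simp
qed
lemma lc_finite: "linear_code p n U \<Longrightarrow> finite U" by (metis finite_subset lc_sub finite_Zpn)

lemma lc_Zpn: "0 < p \<Longrightarrow> linear_code p n (Zpn p n)"
  by (simp add: linear_code_def)

lemma lc_bij: assumes U: "linear_code p n U" and p: "0 < p" and u0: "u0 \<in> U"
  shows "bij_betw (\<lambda>b. vadd p b u0) U U"
proof (rule bij_betwI[where g="\<lambda>b. vsub p b u0"])
  show "(\<lambda>b. vadd p b u0) \<in> U \<rightarrow> U" using lc_add[OF U] u0 by auto
  show "(\<lambda>b. vsub p b u0) \<in> U \<rightarrow> U" using lc_vsub[OF U p] u0 by auto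
  show "\<And>x. x \<in> U \<Longrightarrow> vsub p (vadd p x u0) u0 = x"
    using vsub_vadd_cancel[OF p] lc_sub[OF U] u0 by blast
  show "\<And>x. x \<in> U \<Longrightarrow> vadd p (vsub p x u0) u0 = x"
    using vadd_vsub_cancel[OF p] lc_sub[OF U] u0 by blast
qed

lemma lc_sum_shift: assumes U: "linear_code p n U" and p: "0 < p" and u0: "u0 \<in> U"
  shows "(\<Sum>b\<in>U. f (vadd p b u0)) = (\<Sum>b\<in>U. f b)"
  using sum.reindex_bij_betw[OF lc_bij[OF U p u0], of f] .

lemma char_sum: assumes U: "linear_code p n U" and p: "0 < p"
  shows "(\<Sum>a\<in>U. chi p n a y) = (if (\<forall>a\<in>U. dot p n a y = 0) then of_nat (card U) else 0)"
proof (cases "\<forall>a\<in>U. dot p n a y = 0")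
  case True
  then show ?thesis by (simp add: chi_zero)
next
  case False
  then obtain a0 where a0: "a0 \<in> U" "dot p n a0 y \<noteq> 0" by blast
  have "(\<Sum>a\<in>U. chi p n a y) = (\<Sum>a\<in>U. chi p n (vadd p a a0) y)"
    using lc_sum_shift[OF U p a0(1), of "\<lambda>a. chi p n a y"] by simp
  also have "\<dots> = (\<Sum>a\<in>U. chi p n a y) * chi p n a0 y"
    by (simp add: chi_vadd_left[OF p] sum_distrib_right)
  finally have "(\<Sum>a\<in>U. chi p n a y) * (1 - chi p n a0 y) = 0" by (simp add: algebra_simps)
  moreover have "1 - chi p n a0 y \<noteq> 0" using chi_neq_1[OF p a0(2)] by simp
  ultimately have "(\<Sum>a\<in>U. chi p n a y) = 0" by simp
  then show ?thesis unfolding if_not_P[OF False] .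
qed

definition unitv :: "nat \<Rightarrow> nat \<Rightarrow> nat" where "unitv i = (\<lambda>j. if j = i then 1 else 0)"

lemma unitv_Zpn: "1 < p \<Longrightarrow> i < n \<Longrightarrow> unitv i \<in> Zpn p n"
  by (auto simp: Zpn_def unitv_def)

lemma dot_unitv: "i < n \<Longrightarrow> dot p n (unitv i) y = y i mod p"
proof -
  assume i: "i < n"
  have "(\<Sum>j<n. unitv i j * y j) = (\<Sum>j<n. if j = i then y j else 0)"
    by (rule sum.cong) (auto simp: unitv_def)
  also have "\<dots> = y i" using i by simp
  finally show ?thesis by (simp add: dot_def)
qed

lemma Zpn_dual_zero: assumes p: "1 < p" and y: "y \<in> Zpn p n" and h: "\<forall>a\<in>Zpn p n. dot p n a y = 0"
  shows "y = (\<lambda>i. 0)"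
proof
  fix i show "y i = 0"
  proof (cases "i < n")
    case True
    then have "dot p n (unitv i) y = 0" using h unitv_Zpn[OF p True] by blast
    then show ?thesis using dot_unitv[OF True] Zpn_lt[OF y] p by simp
  next
    case False then show ?thesis using y by (simp add: Zpn_def)
  qed
qed

lemma char_sum_Zpn: assumes p: "1 < p" and y: "y \<in> Zpn p n"
  shows "(\<Sum>a\<in>Zpn p n. chi p n a y) = (if y = (\<lambda>i. 0) then of_nat (p ^ n) else 0)"
proof -
  have p0: "0 < p" using p by simp
  note cs = char_sum[OF lc_Zpn[OF p0, of n] p0, where y=y]
  show ?thesis
  proof (cases "y = (\<lambda>i. 0)")
    case True
    then have "\<forall>a\<in>Zpn p n. dot p n a y = 0" by simp
    then show ?thesis using cs True card_Zpn[OF p0] by simp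
  next
    case False
    then have nz: "\<not> (\<forall>a\<in>Zpn p n. dot p n a y = 0)" using Zpn_dual_zero[OF p y] by blast
    have "(\<Sum>a\<in>Zpn p n. chi p n a y) = 0" using cs by (simp only: if_not_P[OF nz])
    then show ?thesis using False by simp
  qed
qed



lemma inverse_mod_prime:
  assumes p: "prime (p::nat)" and c: "0 < c" "c < p"
  shows "\<exists>c'. (c * c') mod p = 1"
proof -
  have "\<not> p dvd c" using c by (auto dest: dvd_imp_le)
  then have "coprime p c" using prime_imp_coprime[OF p] by blast
  then have g: "gcd c p = 1" by (simp add: coprime_iff_gcd_eq_1 gcd.commute)
  obtain x y where "c * x = p * y + gcd c p" using bezout_nat[of c p] c by auto
  then have "c * x = p * y + 1" using g by simp
  then have "(c * x) mod p = (1 + y * p) mod p" by (simp add: mult.commute)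
  also have "\<dots> = 1 mod p" by (rule mod_mult_self1)
  also have "\<dots> = 1" using prime_gt_1_nat[OF p] by simp
  finally have "(c * x) mod p = 1" .
  then show ?thesis by blast
qed

lemma dot_Suc: "dot p (Suc n) a u = (dot p n a u + a n * u n) mod p"
  by (simp add: dot_def mod_simps)

lemma Zpn_mono: "0 < p \<Longrightarrow> v \<in> Zpn p n \<Longrightarrow> v \<in> Zpn p (Suc n)"
  unfolding Zpn_def by (auto simp: less_Suc_eq)

lemma Zpn_Suc_last: assumes u: "u \<in> Zpn p (Suc n)" and un: "u n = 0" shows "u \<in> Zpn p n"
  unfolding Zpn_def
proof (intro CollectI conjI allI impI)
  fix i assume "i < n" then show "u i < p" using u by (simp add: Zpn_def)
next
  fix i assume i: "n \<le> i"
  show "u i = 0"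
  proof (cases "i = n")
    case True then show ?thesis using un by simp
  next
    case False then have "Suc n \<le> i" using i by simp
    then show ?thesis using u by (simp add: Zpn_def)
  qed
qed

lemma double_dual_aux:
  assumes p: "prime p"
  shows "linear_code p n U \<Longrightarrow> x \<in> Zpn p n \<Longrightarrow> x \<notin> U \<Longrightarrow>
     \<exists>a\<in>Zpn p n. (\<forall>u\<in>U. dot p n a u = 0) \<and> dot p n a x \<noteq> 0"
proof (induction n arbitrary: U x)
  case 0
  have "x = (\<lambda>i. 0)" using 0(2) by (auto simp: Zpn_def)
  then show ?case using lc_zero[OF 0(1)] 0(3) by simp
next
  case (Suc n)
  have p1: "1 < p" using prime_gt_1_nat[OF p] .
  then have p0: "0 < p" by simp
  note U = Suc.prems(1)
  have Usub: "U \<subseteq> Zpn p (Suc n)" using lc_sub[OF U] .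
  show ?case
  proof (cases "\<forall>u\<in>U. u n = 0")
    case allz: True
    show ?thesis
    proof (cases "x n = 0")
      case False
      have "unitv n \<in> Zpn p (Suc n)" using unitv_Zpn[OF p1] by simp
      moreover have "\<forall>u\<in>U. dot p (Suc n) (unitv n) u = 0" using allz dot_unitv[of n "Suc n"] by auto
      moreover have "dot p (Suc n) (unitv n) x \<noteq> 0"
        using dot_unitv[of n "Suc n"] False Zpn_lt[OF Suc.prems(2) p0, of n] by simp
      ultimately show ?thesis by blast
    next
      case True
      have U': "linear_code p n U"
        unfolding linear_code_def
      proof (intro conjI)
        show "U \<subseteq> Zpn p n"
        proof
          fix u assume u: "u \<in> U"
          then have "u \<in> Zpn p (Suc n)" using Usub by blast
          then show "u \<in> Zpn p n" using allz u Zpn_Suc_last by blast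
        qed
      qed (use U in \<open>auto simp: linear_code_def\<close>)
      have x': "x \<in> Zpn p n" using Suc.prems(2) True Zpn_Suc_last by blast
      obtain a where a: "a \<in> Zpn p n" "\<forall>u\<in>U. dot p n a u = 0" "dot p n a x \<noteq> 0"
        using Suc.IH[OF U' x' Suc.prems(3)] by blast
      have an: "a n = 0" using a(1) by (simp add: Zpn_def)
      have "a \<in> Zpn p (Suc n)" using Zpn_mono[OF p0 a(1)] .
      moreover have "\<forall>u\<in>U. dot p (Suc n) a u = 0" using a(2) an by (simp add: dot_Suc)
      moreover have "dot p (Suc n) a x \<noteq> 0" using a(3) an dot_lt[OF p0, of n a x] by (simp add: dot_Suc)
      ultimately show ?thesis by blast
    qed
  next
    case False
    then obtain u0 where u0: "u0 \<in> U" "u0 n \<noteq> 0" by blast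
    have u0Z: "u0 \<in> Zpn p (Suc n)" using u0 Usub by blast
    have "u0 n < p" using Zpn_lt[OF u0Z p0] .
    then obtain c' where c': "(u0 n * c') mod p = 1" using inverse_mod_prime[OF p] u0(2) by blast
    define u1 where "u1 = smul p c' u0"
    have u1U: "u1 \<in> U" unfolding u1_def using lc_smul'[OF U p0 u0(1)] .
    have u1Z: "u1 \<in> Zpn p (Suc n)" using u1U Usub by blast
    have u1n: "u1 n = 1" using c' by (simp add: u1_def smul_def mult.commute)
    define pr where "pr = (\<lambda>u. vsub p u (smul p (u n) u1))"
    have smZ: "\<And>c. smul p c u1 \<in> Zpn p (Suc n)" using smul_Zpn[OF p0 u1Z] .
    have smle: "\<And>c i. smul p c u1 i \<le> p" using Zpn_le[OF smZ] .
    have int_pr: "int (pr u i) = (int (u i) - (int (u n) * int (u1 i)) mod int p) mod int p" for u i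
      using int_vsub[of "smul p (u n) u1" i p u, OF smle] by (simp add: pr_def int_smul)
    have prZ: "pr u \<in> Zpn p n" if u: "u \<in> Zpn p (Suc n)" for u
    proof -
      have "pr u \<in> Zpn p (Suc n)" unfolding pr_def using vsub_Zpn[OF p0 u smZ] .
      moreover have "pr u n = 0"
      proof (rule nat_eq_via_int)
        show "int (pr u n) = int 0" using int_pr[of u n] u1n by (simp add: mod_simps)
      qed
      ultimately show ?thesis using Zpn_Suc_last by blast
    qed
    have pr_add: "pr (vadd p u v) = vadd p (pr u) (pr v)" for u v
    proof (rule ext, rule nat_eq_via_int)
      fix i
      have "int (pr (vadd p u v) i) = (int (u i) + int (v i) - (int (u n) + int (v n)) * int (u1 i)) mod int p"
        by (simp add: int_pr int_vadd mod_simps)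
      also have "\<dots> = ((int (u i) - int (u n) * int (u1 i)) + (int (v i) - int (v n) * int (u1 i))) mod int p"
        by (simp add: algebra_simps)
      also have "\<dots> = int (vadd p (pr u) (pr v) i)"
        by (simp add: int_pr int_vadd mod_simps)
      finally show "int (pr (vadd p u v) i) = int (vadd p (pr u) (pr v) i)" .
    qed
    have pr_smul: "pr (smul p c u) = smul p c (pr u)" for u c
    proof (rule ext, rule nat_eq_via_int)
      fix i
      have "int (pr (smul p c u) i) = (int c * int (u i) - (int c * int (u n)) * int (u1 i)) mod int p"
        by (simp add: int_pr int_smul mod_simps)
      also have "\<dots> = (int c * (int (u i) - int (u n) * int (u1 i))) mod int p"
        by (simp add: algebra_simps)
      also have "\<dots> = int (smul p c (pr u) i)"
        by (simp add: int_pr int_smul mod_simps)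
      finally show "int (pr (smul p c u) i) = int (smul p c (pr u) i)" .
    qed
    have pr0: "pr (\<lambda>i. 0) = (\<lambda>i. 0)"
      by (rule ext) (simp add: pr_def vsub_def smul_def)
    define U' where "U' = pr ` U"
    have U': "linear_code p n U'"
      unfolding linear_code_def
    proof (intro conjI ballI allI impI)
      show "U' \<subseteq> Zpn p n" unfolding U'_def using prZ Usub by blast
      show "(\<lambda>i. 0) \<in> U'" unfolding U'_def using pr0 lc_zero[OF U] by (metis image_eqI)
      fix u v assume "u \<in> U'" "v \<in> U'"
      then obtain u' v' where "u' \<in> U" "v' \<in> U" "u = pr u'" "v = pr v'" unfolding U'_def by blast
      then show "vadd p u v \<in> U'" unfolding U'_def using pr_add lc_add[OF U] by (metis image_eqI)
    next
      fix a u assume "a < p" "u \<in> U'"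
      then obtain u' where "u' \<in> U" "u = pr u'" unfolding U'_def by blast
      then show "smul p a u \<in> U'" unfolding U'_def using pr_smul lc_smul[OF U \<open>a < p\<close>] by (metis image_eqI)
    qed
    have xZ: "x \<in> Zpn p (Suc n)" using Suc.prems(2) .
    have x'Z: "pr x \<in> Zpn p n" using prZ[OF xZ] .
    have x'U: "pr x \<notin> U'"
    proof
      assume "pr x \<in> U'"
      then obtain u where u: "u \<in> U" "pr x = pr u" unfolding U'_def by blast
      have "x = vadd p (pr x) (smul p (x n) u1)"
        unfolding pr_def using vadd_vsub_cancel[OF p0 xZ smZ] by simp
      also have "\<dots> = vadd p (pr u) (smul p (x n) u1)" using u by simp
      also have "\<dots> \<in> U" unfolding pr_def
        using lc_add[OF U lc_vsub[OF U p0 u(1) lc_smul'[OF U p0 u1U]] lc_smul'[OF U p0 u1U]] .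
      finally show False using Suc.prems(3) by blast
    qed
    obtain a' where a': "a' \<in> Zpn p n" "\<forall>u\<in>U'. dot p n a' u = 0" "dot p n a' (pr x) \<noteq> 0"
      using Suc.IH[OF U' x'Z x'U] by blast
    define d where "d = dot p n a' u1"
    define a where "a = a'(n := (p - d) mod p)"
    have aZ: "a \<in> Zpn p (Suc n)"
      unfolding Zpn_def
    proof (intro CollectI conjI allI impI)
      fix i assume "i < Suc n" then show "a i < p" using a'(1) p0 by (cases "i = n") (auto simp: a_def Zpn_def)
    next
      fix i assume "Suc n \<le> i" then show "a i = 0" using a'(1) by (auto simp: a_def Zpn_def)
    qed
    have key: "dot p (Suc n) a u = dot p n a' (pr u)" for u
    proof (rule nat_eq_via_int)
      have dle: "d \<le> p" using dot_lt[OF p0, of n a' u1] by (simp add: d_def)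
      have s1: "(\<Sum>i<n. int (a i) * int (u i)) = (\<Sum>i<n. int (a' i) * int (u i))"
        by (rule sum.cong) (auto simp: a_def)
      have "int (dot p (Suc n) a u) = ((\<Sum>i<n. int (a' i) * int (u i)) + int ((p - d) mod p) * int (u n)) mod int p"
        by (simp add: int_dot s1 a_def)
      also have "\<dots> = ((\<Sum>i<n. int (a' i) * int (u i)) + ((int p - (\<Sum>i<n. int (a' i) * int (u1 i)) mod int p) mod int p) * int (u n)) mod int p"
        using dle by (simp add: zmod_int of_nat_diff d_def int_dot)
      also have "\<dots> = ((\<Sum>i<n. int (a' i) * int (u i)) + int (u n) * ((- (\<Sum>i<n. int (a' i) * int (u1 i))) mod int p)) mod int p"
        by (simp add: mod_simps algebra_simps)
      also have "\<dots> = ((\<Sum>i<n. int (a' i) * int (u i)) + int (u n) * (- (\<Sum>i<n. int (a' i) * int (u1 i)))) mod int p"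
        by (rule mod_add_cong[OF refl mod_mult_right_eq])
      also have "\<dots> = ((\<Sum>i<n. int (a' i) * int (u i)) - (\<Sum>i<n. int (a' i) * int (u1 i)) * int (u n)) mod int p"
        by (simp add: algebra_simps)
      also have "\<dots> = (\<Sum>i<n. int (a' i) * (int (u i) - int (u n) * int (u1 i))) mod int p"
        by (simp add: algebra_simps sum_subtractf sum_distrib_left sum_distrib_right)
      also have "\<dots> = (\<Sum>i<n. int (a' i) * int (pr u i)) mod int p"
        by (rule sum_mod_cong) (simp add: int_pr mod_simps)
      also have "\<dots> = int (dot p n a' (pr u))" by (simp add: int_dot)
      finally show "int (dot p (Suc n) a u) = int (dot p n a' (pr u))" .
    qed
    have "\<forall>u\<in>U. dot p (Suc n) a u = 0" using key a'(2) unfolding U'_def by auto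
    moreover have "dot p (Suc n) a x \<noteq> 0" using key a'(3) by simp
    ultimately show ?thesis using aZ by blast
  qed
qed

lemma double_dual:
  assumes "prime p" "linear_code p n U" "x \<in> Zpn p n" "x \<notin> U"
  shows "\<exists>a\<in>dual_code p n U. dot p n a x \<noteq> 0"
  using double_dual_aux[OF assms] by (auto simp: dual_code_def dot_sym)



section \<open>Quantum codes\<close>

lemma qcode_iff: assumes "finite U"
  shows "\<psi> \<in> qcode p n U \<longleftrightarrow> (\<forall>x. x \<notin> U \<longrightarrow> \<psi> x = 0)"
proof
  assume "\<psi> \<in> qcode p n U"
  then obtain c where c: "\<psi> = (\<lambda>x. \<Sum>u\<in>U. c u * ket u x)" by (auto simp: qcode_def)
  show "\<forall>x. x \<notin> U \<longrightarrow> \<psi> x = 0"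
  proof (intro allI impI)
    fix x assume "x \<notin> U"
    then have "\<forall>u\<in>U. ket u x = 0" by (auto simp: ket_def)
    then show "\<psi> x = 0" unfolding c by simp
  qed
next
  assume h: "\<forall>x. x \<notin> U \<longrightarrow> \<psi> x = 0"
  have "\<psi> = (\<lambda>x. \<Sum>u\<in>U. \<psi> u * ket u x)"
  proof
    fix x
    have "(\<Sum>u\<in>U. \<psi> u * ket u x) = (\<Sum>u\<in>U. if u = x then \<psi> x else 0)"
      by (rule sum.cong) (auto simp: ket_def)
    also have "\<dots> = \<psi> x" using assms h by (cases "x \<in> U") auto
    finally show "\<psi> x = (\<Sum>u\<in>U. \<psi> u * ket u x)" by simp
  qed
  then show "\<psi> \<in> qcode p n U" unfolding qcode_def by blast
qed

lemma dual_sub: "dual_code p n U \<subseteq> Zpn p n" by (auto simp: dual_code_def)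

lemma dual_lc: assumes p: "0 < p" shows "linear_code p n (dual_code p n U)"
  unfolding linear_code_def
proof (intro conjI ballI allI impI)
  show "dual_code p n U \<subseteq> Zpn p n" by (rule dual_sub)
  show "(\<lambda>i. 0) \<in> dual_code p n U" using p by (simp add: dual_code_def)
  fix u v assume u: "u \<in> dual_code p n U" and v: "v \<in> dual_code p n U"
  have "dot p n (vadd p u v) w = 0" if w: "w \<in> U" for w
  proof -
    have "dot p n (vadd p u v) w = dot p n w (vadd p u v)" by (rule dot_sym)
    also have "\<dots> = (dot p n w u + dot p n w v) mod p" by (rule dot_vadd)
    also have "dot p n w u = 0" using u w dot_sym[of p n w u] by (simp add: dual_code_def)
    also have "dot p n w v = 0" using v w dot_sym[of p n w v] by (simp add: dual_code_def)
    finally show ?thesis by simp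
  qed
  then show "vadd p u v \<in> dual_code p n U"
    using u v p by (simp add: dual_code_def)
next
  fix a u assume a: "a < p" and u: "u \<in> dual_code p n U"
  have "dot p n (smul p a u) w = 0" if w: "w \<in> U" for w
  proof -
    have "dot p n (smul p a u) w = dot p n w (smul p a u)" by (rule dot_sym)
    also have "\<dots> = (a * dot p n w u) mod p" by (rule dot_smul)
    also have "dot p n w u = 0" using u w dot_sym[of p n w u] by (simp add: dual_code_def)
    finally show ?thesis by simp
  qed
  then show "smul p a u \<in> dual_code p n U"
    using u p by (simp add: dual_code_def)
qed

lemma vadd_zero_left: "0 < p \<Longrightarrow> y \<in> Zpn p n \<Longrightarrow> vadd p (\<lambda>i. 0) y = y"
  by (rule ext) (simp add: vadd_def Zpn_lt)

lemma vsub_eq_zero: assumes p: "0 < p" and y: "y \<in> Zpn p n" and y': "y' \<in> Zpn p n"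
  shows "vsub p y y' = (\<lambda>i. 0) \<longleftrightarrow> y = y'"
proof
  assume h: "vsub p y y' = (\<lambda>i. 0)"
  have "y = vadd p (vsub p y y') y'" using vadd_vsub_cancel[OF p y y'] by simp
  also have "\<dots> = y'" using h vadd_zero_left[OF p y'] by simp
  finally show "y = y'" .
next
  assume "y = y'" then show "vsub p y y' = (\<lambda>i. 0)"
    using Zpn_le[OF y'] by (auto simp: vsub_def)
qed

definition iqft :: "nat \<Rightarrow> nat \<Rightarrow> qvec \<Rightarrow> qvec" where
  "iqft p n \<psi> = (\<lambda>x. if x \<in> Zpn p n then
      (1 / complex_of_real (sqrt (real p))) ^ n * (\<Sum>y\<in>Zpn p n. cnj (chi p n x y) * \<psi> y) else 0)"

lemma qft_chi: "qft p n g = (\<lambda>y. if y \<in> Zpn p n then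
      (1 / complex_of_real (sqrt (real p))) ^ n * (\<Sum>x\<in>Zpn p n. chi p n x y * g x) else 0)"
  by (simp only: qft_def chi_def)

lemma qft_iqft: assumes p: "1 < p" and \<psi>: "in_space p n \<psi>"
  shows "qft p n (iqft p n \<psi>) = \<psi>"
proof
  fix y
  have p0: "0 < p" using p by simp
  let ?c = "1 / complex_of_real (sqrt (real p))"
  show "qft p n (iqft p n \<psi>) y = \<psi> y"
  proof (cases "y \<in> Zpn p n")
    case False then show ?thesis using \<psi> by (simp add: qft_chi in_space_def)
  next
    case y: True
    have "qft p n (iqft p n \<psi>) y = ?c ^ n * (\<Sum>x\<in>Zpn p n. chi p n x y * (?c ^ n * (\<Sum>y'\<in>Zpn p n. cnj (chi p n x y') * \<psi> y')))"
      using y by (simp add: qft_chi iqft_def)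
    also have "\<dots> = ?c ^ n * ?c ^ n * (\<Sum>x\<in>Zpn p n. \<Sum>y'\<in>Zpn p n. \<psi> y' * (chi p n x y * cnj (chi p n x y')))"
      by (simp add: sum_distrib_left mult_ac)
    also have "\<dots> = ?c ^ n * ?c ^ n * (\<Sum>y'\<in>Zpn p n. \<Sum>x\<in>Zpn p n. \<psi> y' * (chi p n x y * cnj (chi p n x y')))"
      by (subst sum.swap) (rule refl)
    also have "\<dots> = ?c ^ n * ?c ^ n * (\<Sum>y'\<in>Zpn p n. \<psi> y' * (\<Sum>x\<in>Zpn p n. chi p n x y * cnj (chi p n x y')))"
      by (simp add: sum_distrib_left)
    also have "\<dots> = ?c ^ n * ?c ^ n * (\<Sum>y'\<in>Zpn p n. \<psi> y' * (\<Sum>x\<in>Zpn p n. chi p n x (vsub p y y')))"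
      by (intro arg_cong[where f="\<lambda>s. ?c ^ n * ?c ^ n * s"] sum.cong refl)
         (simp add: chi_vsub[OF p0] Zpn_le)
    also have "\<dots> = ?c ^ n * ?c ^ n * (\<Sum>y'\<in>Zpn p n. if y' = y then \<psi> y * of_nat (p ^ n) else 0)"
    proof (intro arg_cong[where f="\<lambda>s. ?c ^ n * ?c ^ n * s"] sum.cong refl)
      fix y' assume y': "y' \<in> Zpn p n"
      have "(\<Sum>x\<in>Zpn p n. chi p n x (vsub p y y')) = (if vsub p y y' = (\<lambda>i. 0) then of_nat (p ^ n) else 0)"
        by (rule char_sum_Zpn[OF p vsub_Zpn[OF p0 y y']])
      then show "\<psi> y' * (\<Sum>x\<in>Zpn p n. chi p n x (vsub p y y')) = (if y' = y then \<psi> y * of_nat (p ^ n) else 0)"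
        using vsub_eq_zero[OF p0 y y'] by auto
    qed
    also have "\<dots> = ?c ^ n * ?c ^ n * (\<psi> y * of_nat (p ^ n))" using y by simp
    also have "\<dots> = \<psi> y"
    proof -
      have ss: "complex_of_real (sqrt (real p)) * complex_of_real (sqrt (real p)) = of_nat p"
      proof -
        have "sqrt (real p) * sqrt (real p) = real p" by simp
        then have "complex_of_real (sqrt (real p) * sqrt (real p)) = complex_of_real (real p)" by simp
        then show ?thesis by (simp only: of_real_mult of_real_of_nat_eq)
      qed
      have pnz: "(of_nat p :: complex) \<noteq> 0" using p0 by simp
      have "?c * ?c = 1 / of_nat p" by (simp only: ss[symmetric]) simp
      then have cc: "?c * ?c * of_nat p = 1" using pnz by simp
      have "?c ^ n * ?c ^ n * of_nat (p ^ n) = (?c * ?c * of_nat p) ^ n" by (simp only: power_mult_distrib of_nat_power)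
      also have "\<dots> = 1" by (simp only: cc power_one)
      finally have "?c ^ n * ?c ^ n * of_nat (p ^ n) = 1" .
      note h = this
      have gen: "\<And>(a::complex) b c. a * (b * c) = (a * c) * b" by (simp add: ac_simps)
      have "?c ^ n * ?c ^ n * (\<psi> y * of_nat (p ^ n)) = (?c ^ n * ?c ^ n * of_nat (p ^ n)) * \<psi> y" by (rule gen)
      also have "\<dots> = \<psi> y" by (simp only: h mult_1)
      finally show ?thesis .
    qed
    finally show ?thesis .
  qed
qed

lemma iqft_support:
  assumes p: "prime p" and W: "linear_code p n W" and \<psi>: "in_space p n \<psi>"
    and inv: "\<forall>y\<in>Zpn p n. \<forall>b\<in>dual_code p n W. \<psi> (vadd p y b) = \<psi> y"
    and x: "x \<notin> W"
  shows "iqft p n \<psi> x = 0"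
proof (cases "x \<in> Zpn p n")
  case False then show ?thesis by (simp add: iqft_def)
next
  case xZ: True
  have p1: "1 < p" using prime_gt_1_nat[OF p] .
  then have p0: "0 < p" by simp
  obtain b where b: "b \<in> dual_code p n W" "dot p n b x \<noteq> 0" using double_dual[OF p W xZ x] by blast
  have bZ: "b \<in> Zpn p n" using b(1) dual_sub by blast
  let ?S = "\<Sum>y\<in>Zpn p n. cnj (chi p n x y) * \<psi> y"
  have "?S = (\<Sum>y\<in>Zpn p n. cnj (chi p n x (vadd p y b)) * \<psi> (vadd p y b))"
    using lc_sum_shift[OF lc_Zpn[OF p0] p0 bZ, of "\<lambda>y. cnj (chi p n x y) * \<psi> y"] by simp
  also have "\<dots> = (\<Sum>y\<in>Zpn p n. cnj (chi p n x b) * (cnj (chi p n x y) * \<psi> y))"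
    by (rule sum.cong) (use inv b(1) in \<open>auto simp: chi_vadd[OF p0]\<close>)
  also have "\<dots> = cnj (chi p n x b) * ?S" by (simp add: sum_distrib_left)
  finally have "?S * (1 - cnj (chi p n x b)) = 0" by (simp add: algebra_simps)
  moreover have "cnj (chi p n x b) \<noteq> 1"
  proof
    assume "cnj (chi p n x b) = 1"
    then have "chi p n x b = 1" by (metis complex_cnj_cnj complex_cnj_one)
    moreover have "chi p n x b \<noteq> 1" using chi_neq_1[OF p0] b(2) by (simp add: dot_sym)
    ultimately show False by simp
  qed
  ultimately have "?S = 0" by simp
  then show ?thesis by (simp add: iqft_def)
qed

lemma inv_in_qft:
  assumes p: "prime p" and W: "linear_code p n W" and \<psi>: "in_space p n \<psi>"
    and inv: "\<forall>y\<in>Zpn p n. \<forall>b\<in>dual_code p n W. \<psi> (vadd p y b) = \<psi> y"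
  shows "\<psi> \<in> qft p n ` qcode p n W"
proof -
  have p1: "1 < p" using prime_gt_1_nat[OF p] .
  have "iqft p n \<psi> \<in> qcode p n W"
    using iqft_support[OF p W \<psi> inv] qcode_iff[OF lc_finite[OF W]] by blast
  moreover have "\<psi> = qft p n (iqft p n \<psi>)" using qft_iqft[OF p1 \<psi>] by simp
  ultimately show ?thesis by blast
qed

lemma qft_in_space: "in_space p n (qft p n g)" by (simp add: in_space_def qft_def)

lemma qft_inv:
  assumes p: "0 < p" and W: "linear_code p n W" and g: "g \<in> qcode p n W"
    and y: "y \<in> Zpn p n" and b: "b \<in> dual_code p n W"
  shows "qft p n g (vadd p y b) = qft p n g y"
proof -
  have bZ: "b \<in> Zpn p n" using b dual_sub by blast
  have g0: "\<forall>x. x \<notin> W \<longrightarrow> g x = 0" using g qcode_iff[OF lc_finite[OF W]] by blast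
  have "(\<Sum>x\<in>Zpn p n. chi p n x (vadd p y b) * g x) = (\<Sum>x\<in>Zpn p n. chi p n x y * g x)"
  proof (rule sum.cong[OF refl])
    fix x assume "x \<in> Zpn p n"
    show "chi p n x (vadd p y b) * g x = chi p n x y * g x"
    proof (cases "x \<in> W")
      case True
      then have "dot p n b x = 0" using b by (simp add: dual_code_def)
      then have "dot p n x b = 0" by (metis dot_sym)
      then show ?thesis by (simp add: chi_vadd[OF p] chi_zero)
    next
      case False then show ?thesis using g0 by simp
    qed
  qed
  then show ?thesis using y vadd_Zpn[OF p y bZ] by (simp add: qft_chi)
qed

lemma css_props:
  assumes p: "0 < p" and V: "linear_code p n V" and W: "linear_code p n W"
    and z: "\<zeta> \<in> css_code p n V W"
  shows "\<forall>x. x \<notin> V \<longrightarrow> \<zeta> x = 0" "in_space p n \<zeta>"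
    "\<forall>y\<in>Zpn p n. \<forall>b\<in>dual_code p n W. \<zeta> (vadd p y b) = \<zeta> y"
proof -
  show "\<forall>x. x \<notin> V \<longrightarrow> \<zeta> x = 0" using z qcode_iff[OF lc_finite[OF V]] by (auto simp: css_code_def)
  obtain g where g: "g \<in> qcode p n W" "\<zeta> = qft p n g" using z by (auto simp: css_code_def)
  show "in_space p n \<zeta>" using g qft_in_space by simp
  show "\<forall>y\<in>Zpn p n. \<forall>b\<in>dual_code p n W. \<zeta> (vadd p y b) = \<zeta> y"
    using qft_inv[OF p W g(1)] g(2) by simp
qed

definition PiC :: "nat \<Rightarrow> nat \<Rightarrow> (nat \<Rightarrow> nat) set \<Rightarrow> (nat \<Rightarrow> nat) set \<Rightarrow> qvec \<Rightarrow> qvec" where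
  "PiC p n V W \<chi> = (\<lambda>y. if y \<in> V then
      (1 / of_nat (card (dual_code p n W))) * (\<Sum>b\<in>dual_code p n W. \<chi> (vsub p y b)) else 0)"

lemma dual_in_V:
  assumes p: "prime p" and V: "linear_code p n V" and W: "linear_code p n W"
    and VW: "dual_code p n V \<subseteq> W"
  shows "dual_code p n W \<subseteq> V"
proof
  fix b assume b: "b \<in> dual_code p n W"
  show "b \<in> V"
  proof (rule ccontr)
    assume "b \<notin> V"
    then obtain a where a: "a \<in> dual_code p n V" "dot p n a b \<noteq> 0"
      using double_dual[OF p V] b dual_sub by blast
    have "a \<in> W" using a(1) VW by blast
    then have "dot p n b a = 0" using b by (simp add: dual_code_def)
    then show False using a(2) by (metis dot_sym)
  qed
qed

lemma vsub_shift: assumes p: "0 < p" and y: "y \<in> Zpn p n" and b: "b \<in> Zpn p n" and b': "b' \<in> Zpn p n"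
  shows "vsub p (vadd p y b') (vadd p b b') = vsub p y b"
proof (rule ext, rule nat_eq_via_int)
  fix i
  have le1: "vadd p b b' i \<le> p" using Zpn_le[OF vadd_Zpn[OF p b b']] .
  have "int (vsub p (vadd p y b') (vadd p b b') i) = ((int (y i) + int (b' i)) mod int p - (int (b i) + int (b' i)) mod int p) mod int p"
    using le1 by (simp add: int_vsub int_vadd)
  also have "\<dots> = (int (y i) - int (b i)) mod int p" by (simp add: mod_simps)
  also have "\<dots> = int (vsub p y b i)" using Zpn_le[OF b] by (simp add: int_vsub)
  finally show "int (vsub p (vadd p y b') (vadd p b b') i) = int (vsub p y b i)" .
qed

lemma PiC_in_css:
  assumes p: "prime p" and V: "linear_code p n V" and W: "linear_code p n W"
    and VW: "dual_code p n V \<subseteq> W"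
  shows "PiC p n V W \<chi> \<in> css_code p n V W"
proof -
  have p0: "0 < p" using prime_gt_0_nat[OF p] .
  let ?D = "dual_code p n W"
  have D: "linear_code p n ?D" using dual_lc[OF p0] .
  have DV: "?D \<subseteq> V" using dual_in_V[OF p V W VW] .
  have VZ: "V \<subseteq> Zpn p n" using lc_sub[OF V] .
  have q1: "PiC p n V W \<chi> \<in> qcode p n V"
    using qcode_iff[OF lc_finite[OF V]] by (simp add: PiC_def)
  have sp: "in_space p n (PiC p n V W \<chi>)" using VZ by (auto simp: in_space_def PiC_def)
  have inv: "\<forall>y\<in>Zpn p n. \<forall>b'\<in>?D. PiC p n V W \<chi> (vadd p y b') = PiC p n V W \<chi> y"
  proof (intro ballI)
    fix y b' assume y: "y \<in> Zpn p n" and b': "b' \<in> ?D"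
    have b'Z: "b' \<in> Zpn p n" using b' dual_sub by blast
    have b'V: "b' \<in> V" using b' DV by blast
    have iff: "vadd p y b' \<in> V \<longleftrightarrow> y \<in> V"
    proof
      assume "vadd p y b' \<in> V"
      then have "vsub p (vadd p y b') b' \<in> V" using lc_vsub[OF V p0 _ b'V] by blast
      then show "y \<in> V" using vsub_vadd_cancel[OF p0 y b'Z] by simp
    next
      assume "y \<in> V" then show "vadd p y b' \<in> V" using lc_add[OF V _ b'V] by blast
    qed
    have "(\<Sum>b\<in>?D. \<chi> (vsub p (vadd p y b') b)) = (\<Sum>b\<in>?D. \<chi> (vsub p (vadd p y b') (vadd p b b')))"
      using lc_sum_shift[OF D p0 b', of "\<lambda>b. \<chi> (vsub p (vadd p y b') b)"] by simp
    also have "\<dots> = (\<Sum>b\<in>?D. \<chi> (vsub p y b))"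
    proof (rule sum.cong[OF refl])
      fix b assume "b \<in> ?D"
      then have "b \<in> Zpn p n" using dual_sub by blast
      then show "\<chi> (vsub p (vadd p y b') (vadd p b b')) = \<chi> (vsub p y b)"
        using vsub_shift[OF p0 y _ b'Z] by simp
    qed
    finally show "PiC p n V W \<chi> (vadd p y b') = PiC p n V W \<chi> y"
      using iff by (simp add: PiC_def)
  qed
  have q2: "PiC p n V W \<chi> \<in> qft p n ` qcode p n W" using inv_in_qft[OF p W sp inv] .
  show ?thesis using q1 q2 by (simp add: css_code_def)
qed

lemma cinner_self_zero: assumes "cinner p n \<phi> \<phi> = 0" shows "\<forall>x\<in>Zpn p n. \<phi> x = 0"
proof -
  have "(\<Sum>x\<in>Zpn p n. (cmod (\<phi> x))\<^sup>2) = 0"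
  proof -
    have "complex_of_real (\<Sum>x\<in>Zpn p n. (cmod (\<phi> x))\<^sup>2) = (\<Sum>x\<in>Zpn p n. cnj (\<phi> x) * \<phi> x)"
      by (simp only: of_real_sum complex_norm_square mult.commute)
    also have "\<dots> = 0" using assms by (simp only: cinner_def)
    finally show ?thesis by (simp only: of_real_eq_0_iff)
  qed
  then have "\<forall>x\<in>Zpn p n. (cmod (\<phi> x))\<^sup>2 = 0"
    by (subst (asm) sum_nonneg_eq_0_iff) auto
  then show ?thesis by simp
qed

lemma cinner_diff_right: "cinner p n \<chi> (\<lambda>x. f x - g x) = cinner p n \<chi> f - cinner p n \<chi> g"
  by (simp add: cinner_def algebra_simps sum_subtractf)

lemma cinner_diff_left: "cinner p n (\<lambda>x. f x - g x) \<chi> = cinner p n f \<chi> - cinner p n g \<chi>"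
  by (simp add: cinner_def algebra_simps sum_subtractf)

lemma proj_unique:
  assumes h1: "\<phi>1 \<in> S \<and> in_space p n \<phi>1 \<and> (\<forall>\<chi>\<in>S. cinner p n \<chi> (\<lambda>x. \<psi> x - \<phi>1 x) = 0)"
    and h2: "\<phi>2 \<in> S \<and> in_space p n \<phi>2 \<and> (\<forall>\<chi>\<in>S. cinner p n \<chi> (\<lambda>x. \<psi> x - \<phi>2 x) = 0)"
  shows "\<phi>1 = \<phi>2"
proof -
  have e: "cinner p n \<chi> \<phi>1 = cinner p n \<chi> \<phi>2" if "\<chi> \<in> S" for \<chi>
    using h1 h2 that cinner_diff_right[of p n \<chi> \<psi>] by (metis right_minus_eq)
  have "cinner p n (\<lambda>x. \<phi>1 x - \<phi>2 x) (\<lambda>x. \<phi>1 x - \<phi>2 x) = 0"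
    using e[of \<phi>1] e[of \<phi>2] h1 h2 by (simp add: cinner_diff_left cinner_diff_right)
  then have z: "\<forall>x\<in>Zpn p n. \<phi>1 x - \<phi>2 x = 0" by (rule cinner_self_zero)
  show ?thesis
  proof
    fix x show "\<phi>1 x = \<phi>2 x"
      using z h1 h2 by (cases "x \<in> Zpn p n") (auto simp: in_space_def)
  qed
qed

lemma PiC_orth:
  assumes p0: "0 < p" and V: "linear_code p n V" and W: "linear_code p n W"
    and z: "\<zeta> \<in> css_code p n V W"
  shows "cinner p n \<zeta> (PiC p n V W \<chi>) = cinner p n \<zeta> \<chi>"
proof -
  let ?D = "dual_code p n W"
  have D: "linear_code p n ?D" using dual_lc[OF p0] .
  have Dne: "card ?D \<noteq> 0" using lc_finite[OF D] lc_zero[OF D] by (metis card_0_eq empty_iff)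
  note zp = css_props[OF p0 V W z]
  have "cinner p n \<zeta> (PiC p n V W \<chi>) = (\<Sum>y\<in>Zpn p n. cnj (\<zeta> y) * ((1 / of_nat (card ?D)) * (\<Sum>b\<in>?D. \<chi> (vsub p y b))))"
    unfolding cinner_def PiC_def by (rule sum.cong[OF refl]) (use zp(1) in auto)
  also have "\<dots> = (1 / of_nat (card ?D)) * (\<Sum>y\<in>Zpn p n. \<Sum>b\<in>?D. cnj (\<zeta> y) * \<chi> (vsub p y b))"
    by (simp add: sum_distrib_left mult_ac)
  also have "\<dots> = (1 / of_nat (card ?D)) * (\<Sum>b\<in>?D. \<Sum>y\<in>Zpn p n. cnj (\<zeta> y) * \<chi> (vsub p y b))"
    by (subst sum.swap) (rule refl)
  also have "\<dots> = (1 / of_nat (card ?D)) * (\<Sum>b\<in>?D. cinner p n \<zeta> \<chi>)"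
  proof (intro arg_cong[where f="\<lambda>s. (1 / of_nat (card ?D)) * s"] sum.cong refl)
    fix b assume b: "b \<in> ?D"
    have bZ: "b \<in> Zpn p n" using b dual_sub by blast
    have "(\<Sum>y\<in>Zpn p n. cnj (\<zeta> y) * \<chi> (vsub p y b)) = (\<Sum>y\<in>Zpn p n. cnj (\<zeta> (vadd p y b)) * \<chi> (vsub p (vadd p y b) b))"
      using lc_sum_shift[OF lc_Zpn[OF p0] p0 bZ, of "\<lambda>y. cnj (\<zeta> y) * \<chi> (vsub p y b)"] by simp
    also have "\<dots> = (\<Sum>y\<in>Zpn p n. cnj (\<zeta> y) * \<chi> y)"
      by (rule sum.cong[OF refl]) (use zp(3) b vsub_vadd_cancel[OF p0 _ bZ] in auto)
    finally show "(\<Sum>y\<in>Zpn p n. cnj (\<zeta> y) * \<chi> (vsub p y b)) = cinner p n \<zeta> \<chi>" by (simp add: cinner_def)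
  qed
  also have "\<dots> = cinner p n \<zeta> \<chi>" using Dne by simp
  finally show ?thesis .
qed

lemma proj_PiC:
  assumes p: "prime p" and V: "linear_code p n V" and W: "linear_code p n W"
    and VW: "dual_code p n V \<subseteq> W"
  shows "proj p n (css_code p n V W) \<chi> = PiC p n V W \<chi>"
  unfolding proj_def
proof (rule the_equality)
  have p0: "0 < p" using prime_gt_0_nat[OF p] .
  let ?D = "dual_code p n W"
  let ?S = "css_code p n V W"
  have D: "linear_code p n ?D" using dual_lc[OF p0] .
  have Dne: "card ?D \<noteq> 0" using lc_finite[OF D] lc_zero[OF D] by (metis card_0_eq empty_iff)
  have VZ: "V \<subseteq> Zpn p n" using lc_sub[OF V] .
  have orth: "cinner p n \<zeta> (PiC p n V W \<chi>) = cinner p n \<zeta> \<chi>" if z: "\<zeta> \<in> ?S" for \<zeta>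
    using PiC_orth[OF p0 V W z] .
  show "PiC p n V W \<chi> \<in> ?S \<and> in_space p n (PiC p n V W \<chi>) \<and>
      (\<forall>\<zeta>\<in>?S. cinner p n \<zeta> (\<lambda>x. \<chi> x - PiC p n V W \<chi> x) = 0)"
    using PiC_in_css[OF p V W VW] VZ orth
    by (auto simp: in_space_def PiC_def cinner_diff_right)
  fix \<phi> assume "\<phi> \<in> ?S \<and> in_space p n \<phi> \<and> (\<forall>\<zeta>\<in>?S. cinner p n \<zeta> (\<lambda>x. \<chi> x - \<phi> x) = 0)"
  moreover have "PiC p n V W \<chi> \<in> ?S \<and> in_space p n (PiC p n V W \<chi>) \<and>
      (\<forall>\<zeta>\<in>?S. cinner p n \<zeta> (\<lambda>x. \<chi> x - PiC p n V W \<chi> x) = 0)"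
    using PiC_in_css[OF p V W VW] VZ orth
    by (auto simp: in_space_def PiC_def cinner_diff_right)
  ultimately show "\<phi> = PiC p n V W \<chi>" by (rule proj_unique)
qed



section \<open>Decomposition of positive semidefinite matrices\<close>

definition bf :: "'a set \<Rightarrow> ('a \<Rightarrow> 'a \<Rightarrow> complex) \<Rightarrow> ('a \<Rightarrow> complex) \<Rightarrow> ('a \<Rightarrow> complex) \<Rightarrow> complex" where
  "bf X r f g = (\<Sum>x\<in>X. \<Sum>y\<in>X. cnj (f x) * r x y * g y)"

definition dlt :: "'a \<Rightarrow> 'a \<Rightarrow> complex" where "dlt a = (\<lambda>x. if x = a then 1 else 0)"

lemma bf_add_left: "bf X r (\<lambda>x. f1 x + f2 x) g = bf X r f1 g + bf X r f2 g"
  by (simp add: bf_def distrib_left distrib_right sum.distrib)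
lemma bf_add_right: "bf X r f (\<lambda>x. g1 x + g2 x) = bf X r f g1 + bf X r f g2"
  by (simp add: bf_def distrib_left distrib_right sum.distrib)
lemma bf_scale_left: "bf X r (\<lambda>x. c * f x) g = cnj c * bf X r f g"
  by (simp add: bf_def sum_distrib_left mult_ac)
lemma bf_scale_right: "bf X r f (\<lambda>x. c * g x) = c * bf X r f g"
  by (simp add: bf_def sum_distrib_left mult_ac)
lemma bf_dlt_left: "finite X \<Longrightarrow> a \<in> X \<Longrightarrow> bf X r (dlt a) g = (\<Sum>y\<in>X. r a y * g y)"
proof -
  assume "finite X" "a \<in> X"
  have "bf X r (dlt a) g = (\<Sum>x\<in>X. if x = a then (\<Sum>y\<in>X. r a y * g y) else 0)"
    unfolding bf_def by (intro sum.cong refl) (simp add: dlt_def)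
  also have "\<dots> = (\<Sum>y\<in>X. r a y * g y)" using \<open>finite X\<close> \<open>a \<in> X\<close> by simp
  finally show ?thesis .
qed
lemma bf_dlt_right: "finite X \<Longrightarrow> b \<in> X \<Longrightarrow> bf X r f (dlt b) = (\<Sum>x\<in>X. cnj (f x) * r x b)"
proof -
  assume "finite X" "b \<in> X"
  have "bf X r f (dlt b) = (\<Sum>x\<in>X. \<Sum>y\<in>X. if y = b then cnj (f x) * r x b else 0)"
    unfolding bf_def by (intro sum.cong refl) (simp add: dlt_def)
  also have "\<dots> = (\<Sum>x\<in>X. cnj (f x) * r x b)" using \<open>finite X\<close> \<open>b \<in> X\<close> by simp
  finally show ?thesis .
qed
lemma bf_dlt_dlt: "finite X \<Longrightarrow> a \<in> X \<Longrightarrow> b \<in> X \<Longrightarrow> bf X r (dlt a) (dlt b) = r a b"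
proof -
  assume X: "finite X" and a: "a \<in> X" and b: "b \<in> X"
  have "bf X r (dlt a) (dlt b) = (\<Sum>y\<in>X. if y = b then r a b else 0)"
    unfolding bf_dlt_left[OF X a] by (intro sum.cong refl) (simp add: dlt_def)
  also have "\<dots> = r a b" using X b by simp
  finally show ?thesis .
qed

definition herm :: "('a \<Rightarrow> 'a \<Rightarrow> complex) \<Rightarrow> bool" where
  "herm r \<longleftrightarrow> (\<forall>x y. r y x = cnj (r x y))"

lemma hermD: "herm r \<Longrightarrow> r y x = cnj (r x y)" unfolding herm_def by blast

definition psd :: "'a set \<Rightarrow> ('a \<Rightarrow> 'a \<Rightarrow> complex) \<Rightarrow> bool" where
  "psd X r \<longleftrightarrow> (\<forall>f. 0 \<le> Re (bf X r f f))"

lemma diag_nonneg: assumes "finite X" "psd X r" "a \<in> X" shows "0 \<le> Re (r a a)"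
proof -
  have "0 \<le> Re (bf X r (dlt a) (dlt a))" using assms(2) unfolding psd_def by blast
  then show ?thesis using bf_dlt_dlt[OF assms(1) assms(3) assms(3)] by simp
qed

lemma diag_real: assumes "herm r" shows "r a a = complex_of_real (Re (r a a))"
proof -
  have e: "r a a = cnj (r a a)" using hermD[OF assms, of a a] .
  have "Im (r a a) = Im (cnj (r a a))" using e by simp
  then have "Im (r a a) = 0" by simp
  then show ?thesis by (simp add: complex_eq_iff)
qed

lemma row_zero:
  assumes X: "finite X" and h: "herm r" and ps: "psd X r" and a: "a \<in> X" and b: "b \<in> X"
    and raa: "r a a = 0"
  shows "r a b = 0"
proof (rule ccontr)
  assume nz: "r a b \<noteq> 0"
  then have ab: "a \<noteq> b" using raa by auto
  define c where "c = r a b"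
  define t :: real where "t = (\<bar>Re (r b b)\<bar> + 1) / (2 * (cmod c)\<^sup>2)"
  define s where "s = - complex_of_real t * c"
  have cpos: "0 < (cmod c)\<^sup>2" using nz by (simp add: c_def)
  let ?f = "\<lambda>x. s * dlt a x + dlt b x"
  have "bf X r ?f ?f = cnj s * (s * r a a + r a b) + (s * r b a + r b b)"
    by (simp add: bf_add_left bf_add_right bf_scale_left bf_scale_right bf_dlt_dlt X a b algebra_simps)
  also have "\<dots> = cnj s * c + s * cnj c + r b b" using raa hermD[OF h, of a b] by (simp add: c_def)
  also have "\<dots> = - 2 * complex_of_real (t * (cmod c)\<^sup>2) + r b b"
    by (simp add: s_def complex_norm_square[symmetric] algebra_simps)
  finally have "Re (bf X r ?f ?f) = - 2 * (t * (cmod c)\<^sup>2) + Re (r b b)" by simp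
  also have "- 2 * (t * (cmod c)\<^sup>2) = - (\<bar>Re (r b b)\<bar> + 1)" using cpos by (simp add: t_def)
  finally have "Re (bf X r ?f ?f) < 0" by linarith
  then show False using ps by (auto simp: psd_def not_le dest: spec[of _ ?f])
qed

definition rsupp :: "'a set \<Rightarrow> ('a \<Rightarrow> 'a \<Rightarrow> complex) \<Rightarrow> bool" where
  "rsupp X r \<longleftrightarrow> (\<forall>x y. x \<notin> X \<or> y \<notin> X \<longrightarrow> r x y = 0)"

lemma schur_step:
  assumes X: "finite X" and h: "herm r" and ps: "psd X r" and x0: "x0 \<in> X"
    and d0: "r x0 x0 \<noteq> 0"
  defines "d \<equiv> r x0 x0"
  defines "r' \<equiv> (\<lambda>y z. r y z - r y x0 * r x0 z / d)"
  shows "herm r'" "psd X r'"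
proof -
  have dreal: "d = complex_of_real (Re d)" using diag_real[OF h] by (simp add: d_def)
  have dpos: "0 < Re d" using diag_nonneg[OF X ps x0] d0 dreal unfolding d_def
    by (metis less_eq_real_def of_real_0)
  have cnjd: "cnj d = d" using dreal by (metis Reals_cnj_iff Reals_of_real)
  show "herm r'"
    unfolding herm_def r'_def
  proof (intro allI)
    fix y z
    show "r z y - r z x0 * r x0 y / d = cnj (r y z - r y x0 * r x0 z / d)"
      using hermD[OF h, of y z] hermD[OF h, of x0 z] hermD[OF h, of y x0] cnjd by simp
  qed
  show "psd X r'"
    unfolding psd_def
  proof
    fix f
    define a where "a = (\<Sum>z\<in>X. r x0 z * f z)"
    have ca: "(\<Sum>y\<in>X. cnj (f y) * r y x0) = cnj a"
    proof -
      have "(\<Sum>y\<in>X. cnj (f y) * r y x0) = (\<Sum>y\<in>X. cnj (r x0 y * f y))"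
        by (rule sum.cong[OF refl]) (simp add: hermD[OF h, of x0] mult.commute)
      then show ?thesis unfolding a_def by simp
    qed
    have Q': "bf X r' f f = bf X r f f - cnj a * a / d"
    proof -
      have "bf X r' f f = bf X r f f - (\<Sum>y\<in>X. \<Sum>z\<in>X. (cnj (f y) * r y x0) * (r x0 z * f z) / d)"
        unfolding bf_def r'_def by (simp add: algebra_simps sum_subtractf)
      also have "(\<Sum>y\<in>X. \<Sum>z\<in>X. (cnj (f y) * r y x0) * (r x0 z * f z) / d)
          = (\<Sum>y\<in>X. cnj (f y) * r y x0) * (\<Sum>z\<in>X. r x0 z * f z) / d"
        by (simp add: sum_product sum_divide_distrib)
      finally show ?thesis using ca by (simp add: a_def)
    qed
    define t where "t = - a / d"
    let ?g = "\<lambda>x. f x + t * dlt x0 x"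
    have "bf X r ?g ?g = bf X r f f + t * (\<Sum>y\<in>X. cnj (f y) * r y x0) + cnj t * (\<Sum>z\<in>X. r x0 z * f z) + cnj t * t * d"
    proof -
      have "bf X r ?g ?g = bf X r f f + t * bf X r f (dlt x0) + cnj t * bf X r (dlt x0) f + cnj t * t * bf X r (dlt x0) (dlt x0)"
        by (simp add: bf_add_left bf_add_right bf_scale_left bf_scale_right algebra_simps)
      moreover have "bf X r (dlt x0) (dlt x0) = d" by (simp only: bf_dlt_dlt[OF X x0 x0] d_def)
      moreover have "bf X r f (dlt x0) = (\<Sum>y\<in>X. cnj (f y) * r y x0)" by (rule bf_dlt_right[OF X x0])
      moreover have "bf X r (dlt x0) f = (\<Sum>z\<in>X. r x0 z * f z)" by (rule bf_dlt_left[OF X x0])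
      ultimately show ?thesis by simp
    qed
    also have "\<dots> = bf X r f f + t * cnj a + cnj t * a + cnj t * t * d" using ca by (simp add: a_def)
    also have "\<dots> = bf X r f f - cnj a * a / d"
      using dpos cnjd unfolding t_def by (simp add: field_simps)
    finally have "bf X r ?g ?g = bf X r' f f" using Q' by simp
    then show "0 \<le> Re (bf X r' f f)" using ps by (metis psd_def)
  qed
qed

lemma psd_decomp:
  assumes X: "finite X"
  shows "herm r \<Longrightarrow> psd X r \<Longrightarrow> rsupp X r \<Longrightarrow>
    \<exists>m (v :: nat \<Rightarrow> 'a \<Rightarrow> complex). (\<forall>i<m. \<forall>x. x \<notin> X \<longrightarrow> v i x = 0) \<and> (\<forall>i<m. \<exists>x\<in>X. v i x \<noteq> 0) \<and>
       (\<forall>x y. r x y = (\<Sum>i<m. v i x * cnj (v i y)))"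
proof (induction "card {x\<in>X. r x x \<noteq> 0}" arbitrary: r rule: less_induct)
  case less
  note h = less.prems(1) and ps = less.prems(2) and su = less.prems(3)
  show ?case
  proof (cases "{x\<in>X. r x x \<noteq> 0} = {}")
    case True
    have "r x y = 0" for x y
    proof (cases "x \<in> X \<and> y \<in> X")
      case True
      then show ?thesis using row_zero[OF X h ps] \<open>{x\<in>X. r x x \<noteq> 0} = {}\<close> by blast
    next
      case False then show ?thesis using su by (auto simp: rsupp_def)
    qed
    then show ?thesis by (intro exI[of _ 0]) simp
  next
    case False
    then obtain x0 where x0: "x0 \<in> X" "r x0 x0 \<noteq> 0" by blast
    define d where "d = r x0 x0"
    define r' where "r' = (\<lambda>y z. r y z - r y x0 * r x0 z / d)"
    have h': "herm r'" and ps': "psd X r'"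
      using schur_step[OF X h ps x0] unfolding r'_def d_def by auto
    have su': "rsupp X r'" using su x0 by (auto simp: rsupp_def r'_def)
    have dreal: "d = complex_of_real (Re d)" using diag_real[OF h] by (simp add: d_def)
    have dpos: "0 < Re d" using diag_nonneg[OF X ps x0(1)] x0(2) dreal unfolding d_def
      by (metis less_eq_real_def of_real_0)
    have sub: "{x\<in>X. r' x x \<noteq> 0} \<subseteq> {x\<in>X. r x x \<noteq> 0} - {x0}"
    proof
      fix y assume y: "y \<in> {x\<in>X. r' x x \<noteq> 0}"
      have "y \<noteq> x0" using y x0 by (auto simp: r'_def d_def)
      moreover have "r y y \<noteq> 0"
      proof
        assume ryy: "r y y = 0"
        then have "r y x0 = 0" using row_zero[OF X h ps _ x0(1)] y by blast
        then show False using y ryy by (simp add: r'_def)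
      qed
      ultimately show "y \<in> {x\<in>X. r x x \<noteq> 0} - {x0}" using y by blast
    qed
    have cl: "card {x\<in>X. r' x x \<noteq> 0} < card {x\<in>X. r x x \<noteq> 0}"
    proof -
      have "card {x\<in>X. r' x x \<noteq> 0} \<le> card ({x\<in>X. r x x \<noteq> 0} - {x0})"
        by (rule card_mono) (use X sub in auto)
      also have "\<dots> < card {x\<in>X. r x x \<noteq> 0}"
        by (rule card_Diff1_less) (use X x0 in auto)
      finally show ?thesis .
    qed
    then obtain m :: nat and w :: "nat \<Rightarrow> 'a \<Rightarrow> complex" where w: "\<forall>i<m. \<forall>x. x \<notin> X \<longrightarrow> w i x = 0" "\<forall>i<m. \<exists>x\<in>X. w i x \<noteq> 0"
        "\<forall>x y. r' x y = (\<Sum>i<m. w i x * cnj (w i y))"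
      using less.hyps[OF cl h' ps' su'] by blast
    define sd where "sd = complex_of_real (sqrt (Re d))"
    have sdsd: "sd * sd = d"
    proof -
      have e: "sqrt (Re d) * sqrt (Re d) = Re d" using dpos by simp
      have "sd * sd = complex_of_real (sqrt (Re d) * sqrt (Re d))" by (simp only: sd_def of_real_mult)
      also have "\<dots> = complex_of_real (Re d)" by (simp only: e)
      also have "\<dots> = d" using dreal by simp
      finally show ?thesis .
    qed
    have sdnz: "sd \<noteq> 0" using dpos by (simp add: sd_def)
    have cnjsd: "cnj sd = sd" by (simp add: sd_def)
    define u where "u = (\<lambda>y. r y x0 / sd)"
    define v where "v = (\<lambda>i. if i < m then w i else u)"
    have "\<forall>i<Suc m. \<forall>x. x \<notin> X \<longrightarrow> v i x = 0"
    proof (intro allI impI)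
      fix i x assume i: "i < Suc m" and x: "x \<notin> X"
      show "v i x = 0"
      proof (cases "i < m")
        case True then show ?thesis using w(1) x by (simp add: v_def)
      next
        case False
        have "r x x0 = 0" using su x unfolding rsupp_def by blast
        then show ?thesis using False by (simp add: v_def u_def)
      qed
    qed
    moreover have "\<forall>i<Suc m. \<exists>x\<in>X. v i x \<noteq> 0"
    proof (intro allI impI)
      fix i assume "i < Suc m"
      show "\<exists>x\<in>X. v i x \<noteq> 0"
      proof (cases "i < m")
        case True then show ?thesis using w(2) by (simp add: v_def)
      next
        case False then show ?thesis using x0 sdnz by (auto simp: v_def u_def)
      qed
    qed
    moreover have "\<forall>x y. r x y = (\<Sum>i<Suc m. v i x * cnj (v i y))"
    proof (intro allI)
      fix x y
      have "(\<Sum>i<Suc m. v i x * cnj (v i y)) = (\<Sum>i<m. w i x * cnj (w i y)) + u x * cnj (u y)"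
        by (simp add: v_def)
      also have "u x * cnj (u y) = r x x0 * r x0 y / d"
        using hermD[OF h, of y x0] sdsd cnjsd sdnz by (simp add: u_def field_simps)
      finally have e2: "(\<Sum>i<Suc m. v i x * cnj (v i y)) = (\<Sum>i<m. w i x * cnj (w i y)) + r x x0 * r x0 y / d" .
      have "r' x y = (\<Sum>i<m. w i x * cnj (w i y))" using w(3) by blast
      then have "r x y - r x x0 * r x0 y / d = (\<Sum>i<m. w i x * cnj (w i y))" by (simp add: r'_def)
      then have "r x y = (\<Sum>i<m. w i x * cnj (w i y)) + r x x0 * r x0 y / d" by (simp add: algebra_simps)
      then show "r x y = (\<Sum>i<Suc m. v i x * cnj (v i y))" using e2 by simp
    qed
    ultimately show ?thesis by blast
  qed
qed



section \<open>Twirling\<close>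

definition ZB :: "nat \<Rightarrow> nat \<Rightarrow> nat set \<Rightarrow> (nat \<Rightarrow> nat) set" where
  "ZB p n B = {x \<in> Zpn p n. \<forall>i. i \<notin> B \<longrightarrow> x i = 0}"

lemma ZB_sub: "ZB p n B \<subseteq> Zpn p n" by (auto simp: ZB_def)

lemma lc_ZB: assumes p: "0 < p" shows "linear_code p n (ZB p n B)"
  unfolding linear_code_def
proof (intro conjI ballI allI impI)
  show "ZB p n B \<subseteq> Zpn p n" by (rule ZB_sub)
  show "(\<lambda>i. 0) \<in> ZB p n B" using p by (simp add: ZB_def)
  fix u v assume u: "u \<in> ZB p n B" and v: "v \<in> ZB p n B"
  have "vadd p u v \<in> Zpn p n" using vadd_Zpn[OF p] u v by (auto simp: ZB_def)
  moreover have "\<forall>i. i \<notin> B \<longrightarrow> vadd p u v i = 0" using u v by (auto simp: ZB_def vadd_def)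
  ultimately show "vadd p u v \<in> ZB p n B" by (simp add: ZB_def)
next
  fix a u assume u: "u \<in> ZB p n B"
  have "smul p a u \<in> Zpn p n" using smul_Zpn[OF p] u by (auto simp: ZB_def)
  moreover have "\<forall>i. i \<notin> B \<longrightarrow> smul p a u i = 0" using u by (auto simp: ZB_def smul_def)
  ultimately show "smul p a u \<in> ZB p n B" by (simp add: ZB_def)
qed

definition Pinv :: "nat \<Rightarrow> nat \<Rightarrow> (nat \<Rightarrow> nat) \<Rightarrow> (nat \<Rightarrow> nat) \<Rightarrow> qvec \<Rightarrow> qvec" where
  "Pinv p n a z \<psi> = (\<lambda>y. cnj (chi p n z y) * \<psi> (vadd p y a))"

lemma pauli_chi: "pauli p n x z \<psi> = (\<lambda>b. if b \<in> Zpn p n then chi p n z (vsub p b x) * \<psi> (vsub p b x) else 0)"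
  by (simp only: pauli_def chi_def)

lemma id1: assumes p: "0 < p" and y: "y \<in> Zpn p n" and a: "a \<in> Zpn p n" and b: "b \<in> Zpn p n"
  shows "vadd p (vsub p (vsub p y a) b) a = vsub p y b"
proof (rule ext, rule nat_eq_via_int)
  fix i
  have "int (vadd p (vsub p (vsub p y a) b) a i) = (((int (y i) - int (a i)) mod int p - int (b i)) mod int p + int (a i)) mod int p"
    using Zpn_le[OF a] Zpn_le[OF b] by (simp add: int_vadd int_vsub)
  also have "\<dots> = (int (y i) - int (b i)) mod int p" by (simp add: mod_simps)
  also have "\<dots> = int (vsub p y b i)" using Zpn_le[OF b] by (simp add: int_vsub)
  finally show "int (vadd p (vsub p (vsub p y a) b) a i) = int (vsub p y b i)" .
qed

lemma id2: assumes p: "0 < p" and y: "y \<in> Zpn p n" and a: "a \<in> Zpn p n" and w: "w \<in> Zpn p n"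
  shows "vadd p w (vsub p (vsub p y w) a) = vsub p y a"
proof (rule ext, rule nat_eq_via_int)
  fix i
  have "int (vadd p w (vsub p (vsub p y w) a) i) = (int (w i) + ((int (y i) - int (w i)) mod int p - int (a i)) mod int p) mod int p"
    using Zpn_le[OF a] Zpn_le[OF w] by (simp add: int_vadd int_vsub)
  also have "\<dots> = (int (y i) - int (a i)) mod int p" by (simp add: mod_simps)
  also have "\<dots> = int (vsub p y a i)" using Zpn_le[OF a] by (simp add: int_vsub)
  finally show "int (vadd p w (vsub p (vsub p y w) a) i) = int (vsub p y a i)" .
qed

lemma id3: assumes p: "0 < p" and y: "y \<in> Zpn p n" and a: "a \<in> Zpn p n" and w: "w \<in> Zpn p n"
  shows "vsub p (vsub p y a) w = vsub p (vsub p y w) a"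
proof (rule ext, rule nat_eq_via_int)
  fix i
  have "int (vsub p (vsub p y a) w i) = ((int (y i) - int (a i)) mod int p - int (w i)) mod int p"
    using Zpn_le[OF a] Zpn_le[OF w] by (simp add: int_vsub)
  also have "\<dots> = ((int (y i) - int (w i)) mod int p - int (a i)) mod int p" by (simp add: mod_simps algebra_simps)
  also have "\<dots> = int (vsub p (vsub p y w) a i)" using Zpn_le[OF a] Zpn_le[OF w] by (simp add: int_vsub)
  finally show "int (vsub p (vsub p y a) w i) = int (vsub p (vsub p y w) a i)" .
qed

lemma id4: assumes p: "0 < p" and e: "e \<in> Zpn p n" and a: "a \<in> Zpn p n"
  shows "vsub p e (vsub p e a) = a"
proof (rule ext, rule nat_eq_via_int)
  fix i
  have le: "vsub p e a i \<le> p" using Zpn_le[OF vsub_Zpn[OF p e a]] .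
  have "int (vsub p e (vsub p e a) i) = (int (e i) - (int (e i) - int (a i)) mod int p) mod int p"
    using Zpn_le[OF a] le by (simp add: int_vsub)
  also have "\<dots> = int (a i) mod int p" by (simp add: mod_simps)
  also have "\<dots> = int (a i)" using Zpn_lt[OF a p] by simp
  finally show "int (vsub p e (vsub p e a) i) = int (a i)" .
qed

lemma count_coset:
  assumes p: "0 < p" and V: "linear_code p n V" and y: "y \<in> punct p n V B"
  shows "card {a \<in> ZB p n B. vsub p y a \<in> V} = card (ZB p n B \<inter> V)"
proof -
  obtain w where w: "w \<in> V" "\<forall>i. i \<notin> B \<longrightarrow> y i = w i" using y by (auto simp: punct_def)
  have yZ: "y \<in> Zpn p n" using y by (simp add: punct_def)
  have wZ: "w \<in> Zpn p n" using w(1) lc_sub[OF V] by blast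
  define e where "e = vsub p y w"
  have eZB: "e \<in> ZB p n B"
    unfolding ZB_def e_def using vsub_Zpn[OF p yZ wZ] w(2) Zpn_le[OF wZ] by (auto simp: vsub_def)
  have eZ: "e \<in> Zpn p n" using eZB ZB_sub by blast
  let ?f = "\<lambda>a. vsub p e a"
  have iff: "vsub p y a \<in> V \<longleftrightarrow> ?f a \<in> V" if a: "a \<in> Zpn p n" for a
  proof
    assume "vsub p y a \<in> V"
    then have "vsub p (vsub p y a) w \<in> V" using lc_vsub[OF V p _ w(1)] by blast
    then show "?f a \<in> V" using id3[OF p yZ a wZ] by (simp add: e_def)
  next
    assume "?f a \<in> V"
    then have "vadd p w (?f a) \<in> V" using lc_add[OF V w(1)] by blast
    then show "vsub p y a \<in> V" using id2[OF p yZ a wZ] by (simp add: e_def)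
  qed
  have img: "{a \<in> ZB p n B. vsub p y a \<in> V} = ?f ` (ZB p n B \<inter> V)"
  proof (intro equalityI subsetI)
    fix a assume a: "a \<in> {a \<in> ZB p n B. vsub p y a \<in> V}"
    then have aZB: "a \<in> ZB p n B" and aZ: "a \<in> Zpn p n" using ZB_sub by auto
    have "?f a \<in> ZB p n B" using lc_vsub[OF lc_ZB[OF p] p eZB aZB] .
    moreover have "?f a \<in> V" using a iff[OF aZ] by simp
    moreover have "a = ?f (?f a)" using id4[OF p eZ aZ] by simp
    ultimately show "a \<in> ?f ` (ZB p n B \<inter> V)" by blast
  next
    fix a assume "a \<in> ?f ` (ZB p n B \<inter> V)"
    then obtain u where u: "u \<in> ZB p n B" "u \<in> V" "a = ?f u" by blast
    have uZ: "u \<in> Zpn p n" using u(1) ZB_sub by blast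
    have aZB: "a \<in> ZB p n B" using lc_vsub[OF lc_ZB[OF p] p eZB u(1)] u(3) by simp
    have aZ: "a \<in> Zpn p n" using aZB ZB_sub by blast
    have "?f a = u" using u(3) id4[OF p eZ uZ] by simp
    then have "vsub p y a \<in> V" using iff[OF aZ] u(2) by simp
    then show "a \<in> {a \<in> ZB p n B. vsub p y a \<in> V}" using aZB by blast
  qed
  have inj: "inj_on ?f (ZB p n B \<inter> V)"
  proof (rule inj_onI)
    fix u1 u2 assume "u1 \<in> ZB p n B \<inter> V" "u2 \<in> ZB p n B \<inter> V" and eq: "?f u1 = ?f u2"
    then have "u1 \<in> Zpn p n" "u2 \<in> Zpn p n" using ZB_sub by auto
    then show "u1 = u2" using id4[OF p eZ] eq by metis
  qed
  show ?thesis unfolding img using card_image[OF inj] .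
qed

lemma Dz_dual:
  assumes p: "0 < p" and W: "linear_code p n W"
    and b: "b \<in> dual_code p n W" and bz: "\<forall>z\<in>ZB p n B. dot p n z b = 0"
  shows "b \<in> dual_code p n (punct p n W B)"
proof -
  have bZ: "b \<in> Zpn p n" using b dual_sub by blast
  have "dot p n b w' = 0" if w': "w' \<in> punct p n W B" for w'
  proof -
    obtain w where w: "w \<in> W" "\<forall>i. i \<notin> B \<longrightarrow> w' i = w i" using w' by (auto simp: punct_def)
    have w'Z: "w' \<in> Zpn p n" using w' by (simp add: punct_def)
    have wZ: "w \<in> Zpn p n" using w(1) lc_sub[OF W] by blast
    define e where "e = vsub p w' w"
    have eZB: "e \<in> ZB p n B"
      unfolding ZB_def e_def using vsub_Zpn[OF p w'Z wZ] w(2) Zpn_le[OF wZ] by (auto simp: vsub_def)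
    have "w' = vadd p e w" using vadd_vsub_cancel[OF p w'Z wZ] by (simp add: e_def)
    then have "dot p n b w' = (dot p n b e + dot p n b w) mod p" by (simp add: dot_vadd)
    also have "dot p n b e = 0" using bz eZB by (metis dot_sym)
    also have "dot p n b w = 0" using b w(1) by (simp add: dual_code_def)
    finally show ?thesis by simp
  qed
  then show ?thesis using bZ by (simp add: dual_code_def)
qed

lemma sum_if_const: "finite A \<Longrightarrow> (\<Sum>x\<in>A. if P x then c else 0) = of_nat (card {x\<in>A. P x}) * (c :: complex)"
proof -
  assume "finite A"
  have "{x\<in>A. P x} = A \<inter> Collect P" by auto
  then show ?thesis using \<open>finite A\<close> by (simp add: sum.If_cases)
qed

lemma twirl:
  assumes p: "prime p" and V: "linear_code p n V" and W: "linear_code p n W"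
    and sp: "in_space p n \<psi>" and suppV: "\<forall>x. x \<notin> punct p n V B \<longrightarrow> \<psi> x = 0"
    and inv: "\<forall>y\<in>Zpn p n. \<forall>b\<in>dual_code p n (punct p n W B). \<psi> (vadd p y b) = \<psi> y"
  defines "K \<equiv> of_nat (card (ZB p n B) * card {b \<in> dual_code p n W. \<forall>z\<in>ZB p n B. dot p n z b = 0}
                  * card (ZB p n B \<inter> V)) / (of_nat (card (dual_code p n W)) :: complex)"
  shows "(\<Sum>az\<in>ZB p n B \<times> ZB p n B. pauli p n (fst az) (snd az) (PiC p n V W (Pinv p n (fst az) (snd az) \<psi>)) y)
         = K * \<psi> y"
proof (cases "y \<in> Zpn p n")
  case False
  then show ?thesis using sp by (simp add: pauli_def in_space_def)
next
  case y: True
  have p0: "0 < p" using prime_gt_0_nat[OF p] .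
  let ?Z = "ZB p n B"
  let ?D = "dual_code p n W"
  let ?Dz = "{b \<in> ?D. \<forall>z\<in>?Z. dot p n z b = 0}"
  let ?N = "of_nat (card ?D) :: complex"
  have finZ: "finite ?Z" using lc_finite[OF lc_ZB[OF p0]] .
  have finD: "finite ?D" using lc_finite[OF dual_lc[OF p0]] .
  have ZZ: "\<And>a. a \<in> ?Z \<Longrightarrow> a \<in> Zpn p n" using ZB_sub by blast
  have DZ: "\<And>b. b \<in> ?D \<Longrightarrow> b \<in> Zpn p n" using dual_sub by blast
  have invs: "\<psi> (vsub p y b) = \<psi> y" if b: "b \<in> ?Dz" for b
  proof -
    have bD: "b \<in> dual_code p n (punct p n W B)" using Dz_dual[OF p0 W] b by blast
    have bZ: "b \<in> Zpn p n" using b DZ by blast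
    have "\<psi> (vadd p (vsub p y b) b) = \<psi> (vsub p y b)" using inv vsub_Zpn[OF p0 y bZ] bD by blast
    then show ?thesis using vadd_vsub_cancel[OF p0 y bZ] by simp
  qed
  have stepA: "pauli p n a z (PiC p n V W (Pinv p n a z \<psi>)) y
      = (if vsub p y a \<in> V then (1 / ?N) * (\<Sum>b\<in>?D. chi p n z b * \<psi> (vsub p y b)) else 0)"
    if a: "a \<in> ?Z" and z: "z \<in> ?Z" for a z
  proof -
    have aZ: "a \<in> Zpn p n" using ZZ[OF a] .
    let ?u = "vsub p y a"
    have uZ: "?u \<in> Zpn p n" using vsub_Zpn[OF p0 y aZ] .
    have "pauli p n a z (PiC p n V W (Pinv p n a z \<psi>)) y = chi p n z ?u * PiC p n V W (Pinv p n a z \<psi>) ?u"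
      using y by (simp add: pauli_chi)
    also have "\<dots> = (if ?u \<in> V then (1 / ?N) * (\<Sum>b\<in>?D. chi p n z ?u * (cnj (chi p n z (vsub p ?u b)) * \<psi> (vadd p (vsub p ?u b) a))) else 0)"
      by (simp add: PiC_def Pinv_def sum_distrib_left mult_ac)
    also have "\<dots> = (if ?u \<in> V then (1 / ?N) * (\<Sum>b\<in>?D. chi p n z b * \<psi> (vsub p y b)) else 0)"
    proof -
      have "chi p n z ?u * (cnj (chi p n z (vsub p ?u b)) * \<psi> (vadd p (vsub p ?u b) a)) = chi p n z b * \<psi> (vsub p y b)"
        if b: "b \<in> ?D" for b
      proof -
        have bZ: "b \<in> Zpn p n" using DZ[OF b] .
        have "chi p n z (vsub p ?u b) = chi p n z ?u * cnj (chi p n z b)"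
          using chi_vsub[OF p0] Zpn_le[OF bZ] by blast
        then have "chi p n z ?u * cnj (chi p n z (vsub p ?u b)) = (chi p n z ?u * cnj (chi p n z ?u)) * chi p n z b"
          by (simp add: mult_ac)
        also have "\<dots> = chi p n z b" by (simp add: chi_cnj1)
        finally have c1: "chi p n z ?u * cnj (chi p n z (vsub p ?u b)) = chi p n z b" .
        have c2: "vadd p (vsub p ?u b) a = vsub p y b" using id1[OF p0 y aZ bZ] .
        show ?thesis using c1 c2 by (simp add: mult.assoc[symmetric])
      qed
      then show ?thesis by (simp cong: sum.cong)
    qed
    finally show ?thesis .
  qed
  have stepC: "(\<Sum>z\<in>?Z. \<Sum>b\<in>?D. chi p n z b * \<psi> (vsub p y b))
      = of_nat (card ?Z * card ?Dz) * \<psi> y"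
  proof -
    have "(\<Sum>z\<in>?Z. \<Sum>b\<in>?D. chi p n z b * \<psi> (vsub p y b)) = (\<Sum>b\<in>?D. (\<Sum>z\<in>?Z. chi p n z b) * \<psi> (vsub p y b))"
      by (subst sum.swap) (simp add: sum_distrib_right)
    also have "\<dots> = (\<Sum>b\<in>?D. if (\<forall>z\<in>?Z. dot p n z b = 0) then of_nat (card ?Z) * \<psi> y else 0)"
    proof (rule sum.cong[OF refl])
      fix b assume b: "b \<in> ?D"
      have cs: "(\<Sum>z\<in>?Z. chi p n z b) = (if (\<forall>z\<in>?Z. dot p n z b = 0) then of_nat (card ?Z) else 0)"
        using char_sum[OF lc_ZB[OF p0] p0, where y=b] .
      show "(\<Sum>z\<in>?Z. chi p n z b) * \<psi> (vsub p y b) = (if (\<forall>z\<in>?Z. dot p n z b = 0) then of_nat (card ?Z) * \<psi> y else 0)"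
      proof (cases "\<forall>z\<in>?Z. dot p n z b = 0")
        case True
        then have "\<psi> (vsub p y b) = \<psi> y" using invs b by blast
        then show ?thesis using cs True by simp
      next
        case False
        then show ?thesis using cs by (simp only: if_not_P[OF False]) simp
      qed
    qed
    also have "\<dots> = of_nat (card ?Dz) * (of_nat (card ?Z) * \<psi> y)"
      using sum_if_const[OF finD] by simp
    finally show ?thesis by (simp add: mult_ac)
  qed
  have "(\<Sum>az\<in>?Z \<times> ?Z. pauli p n (fst az) (snd az) (PiC p n V W (Pinv p n (fst az) (snd az) \<psi>)) y)
      = (\<Sum>a\<in>?Z. \<Sum>z\<in>?Z. pauli p n a z (PiC p n V W (Pinv p n a z \<psi>)) y)"
    unfolding sum.cartesian_product by (rule sum.cong[OF refl]) auto
  also have "\<dots> = (\<Sum>a\<in>?Z. \<Sum>z\<in>?Z. if vsub p y a \<in> V then (1 / ?N) * (\<Sum>b\<in>?D. chi p n z b * \<psi> (vsub p y b)) else 0)"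
    by (intro sum.cong refl) (simp add: stepA)
  also have "\<dots> = (\<Sum>a\<in>?Z. if vsub p y a \<in> V then (1 / ?N) * (of_nat (card ?Z * card ?Dz) * \<psi> y) else 0)"
  proof (rule sum.cong[OF refl])
    fix a assume "a \<in> ?Z"
    show "(\<Sum>z\<in>?Z. if vsub p y a \<in> V then (1 / ?N) * (\<Sum>b\<in>?D. chi p n z b * \<psi> (vsub p y b)) else 0)
        = (if vsub p y a \<in> V then (1 / ?N) * (of_nat (card ?Z * card ?Dz) * \<psi> y) else 0)"
    proof (cases "vsub p y a \<in> V")
      case True
      have "(\<Sum>z\<in>?Z. (1 / ?N) * (\<Sum>b\<in>?D. chi p n z b * \<psi> (vsub p y b)))
          = (1 / ?N) * (\<Sum>z\<in>?Z. \<Sum>b\<in>?D. chi p n z b * \<psi> (vsub p y b))"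
        by (rule sum_distrib_left[symmetric])
      then show ?thesis using True stepC by simp
    next
      case False then show ?thesis by simp
    qed
  qed
  also have "\<dots> = of_nat (card {a\<in>?Z. vsub p y a \<in> V}) * ((1 / ?N) * (of_nat (card ?Z * card ?Dz) * \<psi> y))"
    using sum_if_const[OF finZ] by simp
  also have "\<dots> = K * \<psi> y"
  proof (cases "\<psi> y = 0")
    case True then show ?thesis by simp
  next
    case False
    then have "y \<in> punct p n V B" using suppV by blast
    then have "card {a\<in>?Z. vsub p y a \<in> V} = card (?Z \<inter> V)" using count_coset[OF p0 V] by blast
    then show ?thesis by (simp add: K_def field_simps)
  qed
  finally show ?thesis .
qed



lemma punct_lc: assumes p: "0 < p" and V: "linear_code p n V" shows "linear_code p n (punct p n V B)"
  unfolding linear_code_def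
proof (intro conjI ballI allI impI)
  show "punct p n V B \<subseteq> Zpn p n" by (auto simp: punct_def)
  show "(\<lambda>i. 0) \<in> punct p n V B" using p lc_zero[OF V] by (auto simp: punct_def)
  fix u v assume u: "u \<in> punct p n V B" and v: "v \<in> punct p n V B"
  obtain wu where wu: "wu \<in> V" "\<forall>i. i \<notin> B \<longrightarrow> u i = wu i" using u by (auto simp: punct_def)
  obtain wv where wv: "wv \<in> V" "\<forall>i. i \<notin> B \<longrightarrow> v i = wv i" using v by (auto simp: punct_def)
  have "vadd p u v \<in> Zpn p n" using vadd_Zpn[OF p] u v by (auto simp: punct_def)
  moreover have "vadd p wu wv \<in> V" using lc_add[OF V wu(1) wv(1)] .
  moreover have "\<forall>i. i \<notin> B \<longrightarrow> vadd p u v i = vadd p wu wv i" using wu(2) wv(2) by (simp add: vadd_def)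
  ultimately show "vadd p u v \<in> punct p n V B" unfolding punct_def by blast
next
  fix a u assume a: "a < p" and u: "u \<in> punct p n V B"
  obtain wu where wu: "wu \<in> V" "\<forall>i. i \<notin> B \<longrightarrow> u i = wu i" using u by (auto simp: punct_def)
  have "smul p a u \<in> Zpn p n" using smul_Zpn[OF p] u by (auto simp: punct_def)
  moreover have "smul p a wu \<in> V" using lc_smul[OF V a wu(1)] .
  moreover have "\<forall>i. i \<notin> B \<longrightarrow> smul p a u i = smul p a wu i" using wu(2) by (simp add: smul_def)
  ultimately show "smul p a u \<in> punct p n V B" unfolding punct_def by blast
qed

lemma sub_punct: "linear_code p n V \<Longrightarrow> V \<subseteq> punct p n V B"
  using lc_sub unfolding punct_def by blast

lemma dual_anti: "U1 \<subseteq> U2 \<Longrightarrow> dual_code p n U2 \<subseteq> dual_code p n U1"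
  unfolding dual_code_def by blast

lemma cinner_self: "cinner p n f f = complex_of_real (\<Sum>x\<in>Zpn p n. (cmod (f x))\<^sup>2)"
  by (simp only: cinner_def of_real_sum complex_norm_square mult.commute)

lemma cinner_sym: "cinner p n g f = cnj (cinner p n f g)"
  by (simp add: cinner_def mult.commute)

lemma PiC_lin: "PiC p n V W (\<lambda>y. \<Sum>i\<in>I. c i * f i y) y0 = (\<Sum>i\<in>I. c i * PiC p n V W (f i) y0)"
proof (cases "y0 \<in> V")
  case True
  have "(\<Sum>b\<in>dual_code p n W. \<Sum>i\<in>I. c i * f i (vsub p y0 b)) = (\<Sum>i\<in>I. \<Sum>b\<in>dual_code p n W. c i * f i (vsub p y0 b))"
    by (rule sum.swap)
  then show ?thesis using True by (simp add: PiC_def sum_distrib_left mult_ac)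
next
  case False then show ?thesis by (simp add: PiC_def)
qed

lemma PiC_defect:
  assumes p: "prime p" and V: "linear_code p n V" and W: "linear_code p n W"
    and VW: "dual_code p n V \<subseteq> W"
  shows "cinner p n \<chi> \<chi> - cinner p n \<chi> (PiC p n V W \<chi>)
    = cinner p n (\<lambda>x. \<chi> x - PiC p n V W \<chi> x) (\<lambda>x. \<chi> x - PiC p n V W \<chi> x)"
proof -
  have p0: "0 < p" using prime_gt_0_nat[OF p] .
  let ?\<pi> = "PiC p n V W \<chi>"
  have pin: "?\<pi> \<in> css_code p n V W" using PiC_in_css[OF p V W VW] .
  have e1: "cinner p n ?\<pi> \<chi> = cinner p n ?\<pi> ?\<pi>" using PiC_orth[OF p0 V W pin, of \<chi>] by simp
  have rr: "cnj (cinner p n ?\<pi> ?\<pi>) = cinner p n ?\<pi> ?\<pi>" by (simp add: cinner_self)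
  have e2: "cinner p n \<chi> ?\<pi> = cinner p n ?\<pi> ?\<pi>" using cinner_sym[of p n \<chi> ?\<pi>] e1 rr by simp
  show ?thesis using e1 e2 by (simp add: cinner_diff_left cinner_diff_right)
qed

theorem mainTheorem2:
  fixes p n :: nat and V W :: "(nat \<Rightarrow> nat) set" and B :: "nat set" and \<rho> :: qop
  assumes "prime p"
    and "linear_code p n V" and "linear_code p n W"
    and "dual_code p n V \<subseteq> W"
    and "B \<subseteq> {..<n}"
    and "density p n \<rho>"
    and "code_fidelity p n (css_code p n (punct p n V B) (punct p n W B)) \<rho> = 1"
  shows "\<exists>(m::nat) (k::nat) (pr :: nat \<Rightarrow> real) (c :: nat \<Rightarrow> nat \<Rightarrow> complex)
           (ex :: nat \<Rightarrow> nat \<Rightarrow> nat) (ez :: nat \<Rightarrow> nat \<Rightarrow> nat) (\<phi> :: nat \<Rightarrow> nat \<Rightarrow> qvec)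
           (\<psi> :: nat \<Rightarrow> qvec).
     (\<forall>i<m. pr i \<ge> 0) \<and> (\<Sum>i<m. pr i) = 1 \<and>
     (\<forall>j<k. ex j \<in> Zpn p n \<and> ez j \<in> Zpn p n \<and> pauli_supp (ex j) (ez j) \<subseteq> B) \<and>
     (\<forall>i<m. \<forall>j<k. \<phi> i j \<in> css_code p n V W) \<and>
     (\<forall>i<m. \<psi> i = (\<lambda>x. \<Sum>j<k. c i j * pauli p n (ex j) (ez j) (\<phi> i j) x)) \<and>
     (\<forall>i<m. cinner p n (\<psi> i) (\<psi> i) = 1) \<and>
     (\<forall>x y. \<rho> x y = (\<Sum>i<m. complex_of_real (pr i) * \<psi> i x * cnj (\<psi> i y)))"
proof -
  note p = assms(1) and V = assms(2) and W = assms(3) and VW = assms(4)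
    and dens = assms(6) and fid = assms(7)
  have p0: "0 < p" using prime_gt_0_nat[OF p] .
  let ?Z = "Zpn p n"
  let ?VB = "punct p n V B"
  let ?WB = "punct p n W B"
  have VB: "linear_code p n ?VB" using punct_lc[OF p0 V] .
  have WB: "linear_code p n ?WB" using punct_lc[OF p0 W] .
  have VWB: "dual_code p n ?VB \<subseteq> ?WB"
    using dual_anti[OF sub_punct[OF V, of B], of p n] VW sub_punct[OF W, of B] by blast
  have h: "herm \<rho>" using dens unfolding density_def herm_def by blast
  have ps: "psd ?Z \<rho>" using dens unfolding density_def psd_def bf_def by blast
  have su: "rsupp ?Z \<rho>" using dens unfolding density_def rsupp_def by blast
  have tr: "(\<Sum>x\<in>?Z. \<rho> x x) = 1" using dens unfolding density_def by blast
  obtain m :: nat and v :: "nat \<Rightarrow> (nat \<Rightarrow> nat) \<Rightarrow> complex" where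
    v: "\<forall>i<m. \<forall>x. x \<notin> ?Z \<longrightarrow> v i x = 0" "\<forall>i<m. \<exists>x\<in>?Z. v i x \<noteq> 0"
       "\<forall>x y. \<rho> x y = (\<Sum>i<m. v i x * cnj (v i y))"
    using psd_decomp[OF finite_Zpn h ps su] by blast
  let ?P = "PiC p n ?VB ?WB"
  have fidv: "(\<Sum>i<m. cinner p n (v i) (?P (v i))) = 1"
  proof -
    have "code_fidelity p n (css_code p n ?VB ?WB) \<rho> = (\<Sum>x\<in>?Z. ?P (\<lambda>y. \<rho> y x) x)"
      by (simp add: code_fidelity_def proj_PiC[OF p VB WB VWB])
    also have "\<dots> = (\<Sum>x\<in>?Z. \<Sum>i<m. cnj (v i x) * ?P (v i) x)"
    proof (rule sum.cong[OF refl])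
      fix x
      have "(\<lambda>y. \<rho> y x) = (\<lambda>y. \<Sum>i<m. cnj (v i x) * v i y)" using v(3) by (simp add: mult.commute)
      then show "?P (\<lambda>y. \<rho> y x) x = (\<Sum>i<m. cnj (v i x) * ?P (v i) x)" by (simp add: PiC_lin)
    qed
    also have "\<dots> = (\<Sum>i<m. cinner p n (v i) (?P (v i)))"
      unfolding cinner_def by (rule sum.swap)
    finally show ?thesis using fid by simp
  qed
  have trv: "(\<Sum>i<m. cinner p n (v i) (v i)) = 1"
  proof -
    have "(\<Sum>i<m. cinner p n (v i) (v i)) = (\<Sum>x\<in>?Z. \<Sum>i<m. cnj (v i x) * v i x)"
      unfolding cinner_def by (rule sum.swap)
    also have "\<dots> = (\<Sum>x\<in>?Z. \<rho> x x)" using v(3) by (simp add: mult.commute)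
    finally show ?thesis using tr by simp
  qed
  define R where "R = (\<lambda>i. \<Sum>x\<in>?Z. (cmod (v i x - ?P (v i) x))\<^sup>2)"
  have "(\<Sum>i<m. complex_of_real (R i)) = 0"
  proof -
    have "(\<Sum>i<m. complex_of_real (R i)) = (\<Sum>i<m. cinner p n (v i) (v i) - cinner p n (v i) (?P (v i)))"
    proof (rule sum.cong[OF refl])
      fix i
      have "complex_of_real (R i) = cinner p n (\<lambda>x. v i x - ?P (v i) x) (\<lambda>x. v i x - ?P (v i) x)"
        by (simp only: R_def cinner_self)
      also have "\<dots> = cinner p n (v i) (v i) - cinner p n (v i) (?P (v i))"
        by (rule PiC_defect[OF p VB WB VWB, symmetric])
      finally show "complex_of_real (R i) = cinner p n (v i) (v i) - cinner p n (v i) (?P (v i))" .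
    qed
    also have "\<dots> = 0" using fidv trv by (simp add: sum_subtractf)
    finally show ?thesis .
  qed
  then have "(\<Sum>i<m. R i) = 0" by (simp only: of_real_sum[symmetric] of_real_eq_0_iff)
  moreover have "\<forall>i<m. 0 \<le> R i" by (simp add: R_def sum_nonneg)
  ultimately have R0: "\<forall>i<m. R i = 0"
    using sum_nonneg_eq_0_iff[of "{..<m}" R] by auto
  have vP: "v i = ?P (v i)" if i: "i < m" for i
  proof
    fix x
    have "cinner p n (\<lambda>x. v i x - ?P (v i) x) (\<lambda>x. v i x - ?P (v i) x) = 0"
      using R0 i by (simp only: cinner_self R_def) simp
    then have z: "\<forall>x\<in>?Z. v i x - ?P (v i) x = 0" by (rule cinner_self_zero)
    show "v i x = ?P (v i) x"
    proof (cases "x \<in> ?Z")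
      case True then show ?thesis using z by simp
    next
      case False
      then have "x \<notin> ?VB" using lc_sub[OF VB] by blast
      then show ?thesis using v(1) i False by (simp add: PiC_def)
    qed
  qed
  have vcss: "v i \<in> css_code p n ?VB ?WB" if "i < m" for i
    using vP[OF that] PiC_in_css[OF p VB WB VWB, of "v i"] by simp
  define N where "N = (\<lambda>i. \<Sum>x\<in>?Z. (cmod (v i x))\<^sup>2)"
  have Npos: "0 < N i" if i: "i < m" for i
  proof -
    obtain x where x: "x \<in> ?Z" "v i x \<noteq> 0" using v(2) i by blast
    have "0 < (cmod (v i x))\<^sup>2" using x(2) by simp
    also have "\<dots> \<le> N i" unfolding N_def by (rule member_le_sum) (use x in auto)
    finally show ?thesis .
  qed
  have cN: "cinner p n (v i) (v i) = complex_of_real (N i)" for i by (simp add: cinner_self N_def)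
  define s where "s = (\<lambda>i. complex_of_real (sqrt (N i)))"
  have ss: "s i * s i = complex_of_real (N i)" if "i < m" for i
    using Npos[OF that] by (simp add: s_def of_real_mult[symmetric])
  have snz: "s i \<noteq> 0" if "i < m" for i using Npos[OF that] by (simp add: s_def)
  have cs: "cnj (s i) = s i" for i by (simp add: s_def)
  define \<psi> where "\<psi> = (\<lambda>i x. v i x / s i)"
  define pr where "pr = N"
  have pr_nonneg: "\<forall>i<m. pr i \<ge> 0" using Npos by (simp add: pr_def less_imp_le)
  have pr_sum: "(\<Sum>i<m. pr i) = 1"
  proof -
    have "complex_of_real (\<Sum>i<m. pr i) = (\<Sum>i<m. cinner p n (v i) (v i))"
      by (simp add: pr_def cN)
    then have "complex_of_real (\<Sum>i<m. pr i) = 1" using trv by simp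
    then show ?thesis by (metis of_real_eq_1_iff)
  qed
  have rho_eq: "\<forall>x y. \<rho> x y = (\<Sum>i<m. complex_of_real (pr i) * \<psi> i x * cnj (\<psi> i y))"
  proof (intro allI)
    fix x y
    have "(\<Sum>i<m. complex_of_real (pr i) * \<psi> i x * cnj (\<psi> i y)) = (\<Sum>i<m. v i x * cnj (v i y))"
    proof (rule sum.cong[OF refl])
      fix i assume "i \<in> {..<m}"
      then have i: "i < m" by simp
      show "complex_of_real (pr i) * \<psi> i x * cnj (\<psi> i y) = v i x * cnj (v i y)"
        using ss[OF i] snz[OF i] cs[of i] Npos[OF i] by (simp add: pr_def \<psi>_def field_simps)
    qed
    then show "\<rho> x y = (\<Sum>i<m. complex_of_real (pr i) * \<psi> i x * cnj (\<psi> i y))" using v(3) by simp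
  qed
  have psi_norm: "\<forall>i<m. cinner p n (\<psi> i) (\<psi> i) = 1"
  proof (intro allI impI)
    fix i assume i: "i < m"
    have "cinner p n (\<psi> i) (\<psi> i) = cinner p n (v i) (v i) / (s i * s i)"
      using cs[of i] by (simp add: cinner_def \<psi>_def sum_divide_distrib)
    also have "\<dots> = 1" using ss[OF i] cN[of i] Npos[OF i] by simp
    finally show "cinner p n (\<psi> i) (\<psi> i) = 1" .
  qed
  have psi_props: "in_space p n (\<psi> i) \<and> (\<forall>x. x \<notin> ?VB \<longrightarrow> \<psi> i x = 0) \<and>
      (\<forall>y\<in>?Z. \<forall>b\<in>dual_code p n ?WB. \<psi> i (vadd p y b) = \<psi> i y)" if i: "i < m" for i
    using css_props[OF p0 VB WB vcss[OF i]] by (simp add: \<psi>_def in_space_def)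
  let ?Zb = "ZB p n B"
  let ?Pairs = "?Zb \<times> ?Zb"
  have finP: "finite ?Pairs" using lc_finite[OF lc_ZB[OF p0]] by simp
  obtain hh where hh: "bij_betw hh {0..<card ?Pairs} ?Pairs" using ex_bij_betw_nat_finite[OF finP] by blast
  define k where "k = card ?Pairs"
  define ex where "ex = (\<lambda>j. fst (hh j))"
  define ez where "ez = (\<lambda>j. snd (hh j))"
  define K where "K = of_nat (card (ZB p n B) * card {b \<in> dual_code p n W. \<forall>z\<in>ZB p n B. dot p n z b = 0}
                  * card (ZB p n B \<inter> V)) / (of_nat (card (dual_code p n W)) :: complex)"
  have Knz: "K \<noteq> 0"
  proof -
    have f1: "finite ?Zb" using lc_finite[OF lc_ZB[OF p0]] .
    have z1: "(\<lambda>i. 0) \<in> ?Zb" using lc_zero[OF lc_ZB[OF p0]] .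
    have D: "linear_code p n (dual_code p n W)" using dual_lc[OF p0] .
    have f2: "finite {b \<in> dual_code p n W. \<forall>z\<in>ZB p n B. dot p n z b = 0}" using lc_finite[OF D] by simp
    have z2: "(\<lambda>i. 0) \<in> {b \<in> dual_code p n W. \<forall>z\<in>ZB p n B. dot p n z b = 0}" using lc_zero[OF D] by simp
    have f3: "finite (?Zb \<inter> V)" using f1 by simp
    have z3: "(\<lambda>i. 0) \<in> ?Zb \<inter> V" using z1 lc_zero[OF V] by simp
    have z4: "card (dual_code p n W) \<noteq> 0" using lc_finite[OF D] lc_zero[OF D] card_gt_0_iff by blast
    have "card ?Zb \<noteq> 0" using f1 z1 card_gt_0_iff by blast
    moreover have "card {b \<in> dual_code p n W. \<forall>z\<in>ZB p n B. dot p n z b = 0} \<noteq> 0"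
      using f2 z2 card_gt_0_iff by blast
    moreover have "card (?Zb \<inter> V) \<noteq> 0" using f3 z3 card_gt_0_iff by blast
    ultimately show ?thesis using z4 by (simp add: K_def)
  qed
  define \<phi> where "\<phi> = (\<lambda>i j. PiC p n V W (Pinv p n (ex j) (ez j) (\<psi> i)))"
  define c where "c = (\<lambda>(i::nat) (j::nat). 1 / K)"
  have exz: "\<forall>j<k. ex j \<in> ?Z \<and> ez j \<in> ?Z \<and> pauli_supp (ex j) (ez j) \<subseteq> B"
  proof (intro allI impI)
    fix j assume "j < k"
    then have "j \<in> {0..<card ?Pairs}" by (simp add: k_def)
    then have "hh j \<in> ?Pairs" using bij_betwE[OF hh] by blast
    then have a: "ex j \<in> ?Zb" "ez j \<in> ?Zb" by (auto simp: ex_def ez_def mem_Times_iff)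
    then show "ex j \<in> ?Z \<and> ez j \<in> ?Z \<and> pauli_supp (ex j) (ez j) \<subseteq> B"
      by (auto simp: ZB_def pauli_supp_def)
  qed
  have phi_css: "\<forall>i<m. \<forall>j<k. \<phi> i j \<in> css_code p n V W"
    using PiC_in_css[OF p V W VW] by (simp add: \<phi>_def)
  have psi_eq: "\<forall>i<m. \<psi> i = (\<lambda>x. \<Sum>j<k. c i j * pauli p n (ex j) (ez j) (\<phi> i j) x)"
  proof (intro allI impI ext)
    fix i x assume i: "i < m"
    note pp = psi_props[OF i]
    have tw: "(\<Sum>az\<in>?Pairs. pauli p n (fst az) (snd az) (PiC p n V W (Pinv p n (fst az) (snd az) (\<psi> i))) x)
         = K * \<psi> i x"
      unfolding K_def using twirl[OF p V W, of "\<psi> i" B x] pp by blast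
    have "(\<Sum>j<k. c i j * pauli p n (ex j) (ez j) (\<phi> i j) x)
        = (1 / K) * (\<Sum>j\<in>{0..<k}. (\<lambda>az. pauli p n (fst az) (snd az) (PiC p n V W (Pinv p n (fst az) (snd az) (\<psi> i))) x) (hh j))"
      by (simp add: c_def \<phi>_def ex_def ez_def sum_distrib_left atLeast0LessThan)
    also have "\<dots> = (1 / K) * (\<Sum>az\<in>?Pairs. pauli p n (fst az) (snd az) (PiC p n V W (Pinv p n (fst az) (snd az) (\<psi> i))) x)"
      using sum.reindex_bij_betw[OF hh, of "\<lambda>az. pauli p n (fst az) (snd az) (PiC p n V W (Pinv p n (fst az) (snd az) (\<psi> i))) x"]
      by (simp add: k_def)
    also have "\<dots> = \<psi> i x" using tw Knz by simp
    finally show "\<psi> i x = (\<Sum>j<k. c i j * pauli p n (ex j) (ez j) (\<phi> i j) x)" by simp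
  qed
  show ?thesis
    apply (rule exI[of _ m], rule exI[of _ k], rule exI[of _ pr], rule exI[of _ c], rule exI[of _ ex],
           rule exI[of _ ez], rule exI[of _ \<phi>], rule exI[of _ \<psi>])
    using pr_nonneg pr_sum exz phi_css psi_eq psi_norm rho_eq by blast
qed


end
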